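(* Let $N\ge 2$, $t\ge 1$, $r\ge 1$ be integers with $m=t+r\le N$, and let $K\ge N$. Consider the action of the group $\mathcal{L}$ (defined in the context) on pairs $(\mathbf{z},\mathbf{S})$, with $\mathbf{z}\in\mathbb{C}^{N}$ and $\mathbf{S}\in\mathbb{C}^{N\times N}$ Hermitian positive definite, given by $l(\mathbf{z},\mathbf{S})=(\mathbf{G}\mathbf{z}+\mathbf{f},\mathbf{G}\mathbf{S}\mathbf{G}^\dagger)$ for $(\mathbf{G},\mathbf{f})\in\mathcal{L}$. Then a maximal invariant statistic with respect to $\mathcal{L}$ is $$\mathbf{t}_1(\mathbf{z},\mathbf{S})=\begin{cases}\begin{bmatrix}\mathbf{z}_{2.3}^\dagger\mathbf{S}_{2.3}^{-1}\mathbf{z}_{2.3}\\ \mathbf{z}_3^\dagger\mathbf{S}_{33}^{-1}\mathbf{z}_3\end{bmatrix}, & m<N,\\[2mm] \mathbf{z}_2^\dagger\mathbf{S}_{22}^{-1}\mathbf{z}_2, & m=N,\end{cases}$$ where $\mathbf{z}_{2.3}=\mathbf{z}_2-\mathbf{S}_{23}\mathbf{S}_{33}^{-1}\mathbf{z}_3$ and $\mathbf{S}_{2.3}=\mathbf{S}_{22}-\mathbf{S}_{23}\mathbf{S}_{33}^{-1}\mathbf{S}_{32}$.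
   Context: Partition $\mathbf{z}=[\mathbf{z}_1^T\ \mathbf{z}_2^T\ \mathbf{z}_3^T]^T$ with $\mathbf{z}_1\in\mathbb{C}^{t}$, $\mathbf{z}_2\in\mathbb{C}^{r}$, $\mathbf{z}_3\in\mathbb{C}^{N-m}$, and partition $\mathbf{S}$ conformably into blocks $\mathbf{S}_{ij}$, $i,j\in\{1,2,3\}$, of sizes given by replacing $1,2,3$ with $t,r,N-m$. When $m=N$ the "3"-blocks are absent. (In the application, $\mathbf{S}=\sum_{k=1}^K\mathbf{z}_k\mathbf{z}_k^\dagger$ is the sample matrix of $K$ secondary data vectors.) The set $\mathcal{G}$ consists of all nonsingular $N\times N$ block upper-triangular matrices $\mathbf{G}=\begin{bmatrix}\mathbf{G}_{11}&\mathbf{G}_{12}&\mathbf{G}_{13}\\ \mathbf{0}&\mathbf{G}_{22}&\mathbf{G}_{23}\\ \mathbf{0}&\mathbf{0}&\mathbf{G}_{33}\end{bmatrix}$ with $\mathbf{G}_{11}\in GL(t)$, $\mathbf{G}_{22}\in GL(r)$, $\mathbf{G}_{33}\in GL(N-m)$ (block sizes conforming to the partition above; the third block row/column absent if $m=N$). The set $\mathcal{F}$ consists of all $\mathbf{f}=[\mathbf{f}_{11}^T\ \mathbf{0}^T]^T\in\mathbb{C}^N$ with $\mathbf{f}_{11}\in\mathbb{C}^{t}$. The group $\mathcal{L}$ is $\mathcal{G}\times\mathcal{F}$ with operation $(\mathbf{G}_1,\mathbf{f}_1)\circ(\mathbf{G}_2,\mathbf{f}_2)=(\mathbf{G}_2\mathbf{G}_1,\mathbf{G}_2\mathbf{f}_1+\mathbf{f}_2)$.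 A statistic $\mathbf{t}$ is maximal invariant with respect to $\mathcal{L}$ if (i) $\mathbf{t}(\mathbf{z},\mathbf{S})=\mathbf{t}(l(\mathbf{z},\mathbf{S}))$ for all $l\in\mathcal{L}$, and (ii) $\mathbf{t}(\mathbf{z},\mathbf{S})=\mathbf{t}(\bar{\mathbf{z}},\bar{\mathbf{S}})$ implies there exists $l\in\mathcal{L}$ with $(\mathbf{z},\mathbf{S})=l(\bar{\mathbf{z}},\bar{\mathbf{S}})$. *)

theory Defs
  imports "Jordan_Normal_Form.Matrix"
begin

definition ctrans :: "complex mat \<Rightarrow> complex mat" where
  "ctrans A = mat (dim_col A) (dim_row A) (\<lambda>(i,j). cnj (A $$ (j,i)))"

definition minv :: "complex mat \<Rightarrow> complex mat" where
  "minv A = (SOME B. B \<in> carrier_mat (dim_row A) (dim_row A) \<and>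
                     A * B = 1\<^sub>m (dim_row A) \<and> B * A = 1\<^sub>m (dim_row A))"

definition qform :: "complex vec \<Rightarrow> complex mat \<Rightarrow> complex vec \<Rightarrow> complex" where
  "qform x A y = (\<Sum>i<dim_vec x. cnj (x $ i) * (A *\<^sub>v y) $ i)"

definition hpd :: "nat \<Rightarrow> complex mat \<Rightarrow> bool" where
  "hpd N S \<longleftrightarrow> S \<in> carrier_mat N N \<and> ctrans S = S \<and>
     (\<forall>x \<in> carrier_vec N. x \<noteq> 0\<^sub>v N \<longrightarrow> Re (qform x S x) > 0)"

definition subm :: "complex mat \<Rightarrow> nat \<Rightarrow> nat \<Rightarrow> nat \<Rightarrow> nat \<Rightarrow> complex mat" where
  "subm S a b c d = mat (b - a) (d - c) (\<lambda>(i,j). S $$ (a + i, c + j))"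

definition subv :: "complex vec \<Rightarrow> nat \<Rightarrow> nat \<Rightarrow> complex vec" where
  "subv z a b = vec (b - a) (\<lambda>i. z $ (a + i))"

text \<open>Block index (0,1,2 for blocks 1,2,3) of coordinate i under the partition t, r, N-m.\<close>
definition blk :: "nat \<Rightarrow> nat \<Rightarrow> nat \<Rightarrow> nat" where
  "blk t m i = (if i < t then 0 else if i < m then 1 else 2)"

text \<open>The set \<G>: nonsingular block upper-triangular matrices with nonsingular diagonal blocks.\<close>
definition Gset :: "nat \<Rightarrow> nat \<Rightarrow> nat \<Rightarrow> complex mat set" where
  "Gset N t r = {G. G \<in> carrier_mat N N \<and> invertible_mat G \<and>
     (\<forall>i<N. \<forall>j<N. blk t (t + r) j < blk t (t + r) i \<longrightarrow> G $$ (i,j) = 0) \<and>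
     invertible_mat (subm G 0 t 0 t) \<and>
     invertible_mat (subm G t (t + r) t (t + r)) \<and>
     (t + r < N \<longrightarrow> invertible_mat (subm G (t + r) N (t + r) N))}"

definition Fset :: "nat \<Rightarrow> nat \<Rightarrow> complex vec set" where
  "Fset N t = {f. f \<in> carrier_vec N \<and> (\<forall>i. t \<le> i \<and> i < N \<longrightarrow> f $ i = 0)}"

definition Lset :: "nat \<Rightarrow> nat \<Rightarrow> nat \<Rightarrow> (complex mat \<times> complex vec) set" where
  "Lset N t r = Gset N t r \<times> Fset N t"

definition act :: "complex mat \<times> complex vec \<Rightarrow> complex vec \<times> complex mat \<Rightarrow> complex vec \<times> complex mat" where
  "act l zS = (case l of (G, f) \<Rightarrow> case zS of (z, S) \<Rightarrow> (G *\<^sub>v z + f, G * S * ctrans G))"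

definition Dset :: "nat \<Rightarrow> (complex vec \<times> complex mat) set" where
  "Dset N = {(z, S). z \<in> carrier_vec N \<and> hpd N S}"

definition maximal_invariant ::
  "('x \<Rightarrow> 'y) \<Rightarrow> 'x set \<Rightarrow> 'g set \<Rightarrow> ('g \<Rightarrow> 'x \<Rightarrow> 'x) \<Rightarrow> bool" where
  "maximal_invariant T X Grp ac \<longleftrightarrow>
     (\<forall>x\<in>X. \<forall>g\<in>Grp. T (ac g x) = T x) \<and>
     (\<forall>x\<in>X. \<forall>y\<in>X. T x = T y \<longrightarrow> (\<exists>g\<in>Grp. x = ac g y))"

definition t1 :: "nat \<Rightarrow> nat \<Rightarrow> nat \<Rightarrow> complex vec \<times> complex mat \<Rightarrow> complex list" where
  "t1 N t r zS = (case zS of (z, S) \<Rightarrow>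
     let m = t + r;
         z2 = subv z t m; z3 = subv z m N;
         S22 = subm S t m t m; S23 = subm S t m m N;
         S32 = subm S m N t m; S33 = subm S m N m N;
         z23 = z2 - S23 *\<^sub>v (minv S33 *\<^sub>v z3);
         S23' = S22 - S23 * minv S33 * S32
     in if m < N then [qform z23 (minv S23') z23, qform z3 (minv S33) z3]
        else [qform z2 (minv S22) z2])"

end

theory Submission
  imports Defs "Jordan_Normal_Form.Determinant"
begin


lemma ctrans_carrier[simp]: "A \<in> carrier_mat n m \<Longrightarrow> ctrans A \<in> carrier_mat m n"
  unfolding ctrans_def carrier_mat_def by auto

lemma ctrans_dims[simp]: "dim_row (ctrans A) = dim_col A" "dim_col (ctrans A) = dim_row A"
  unfolding ctrans_def by auto

lemma ctrans_index[simp]: "i < dim_col A \<Longrightarrow> j < dim_row A \<Longrightarrow> ctrans A $$ (i,j) = cnj (A $$ (j,i))"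
  unfolding ctrans_def by auto

lemma ctrans_ctrans[simp]: "ctrans (ctrans A) = A"
  by (rule eq_matI, auto)

lemma ctrans_mult: assumes "dim_col A = dim_row B"
  shows "ctrans (A * B) = ctrans B * ctrans A"
proof (rule eq_matI)
  fix i j assume i: "i < dim_row (ctrans B * ctrans A)" and j: "j < dim_col (ctrans B * ctrans A)"
  then show "ctrans (A * B) $$ (i, j) = (ctrans B * ctrans A) $$ (i, j)"
    using assms by (auto simp: scalar_prod_def mult.commute intro!: sum.cong)
qed auto

lemma ctrans_one[simp]: "ctrans (1\<^sub>m n) = 1\<^sub>m n"
  by (rule eq_matI, auto)

lemma ctrans_zero[simp]: "ctrans (0\<^sub>m n m) = 0\<^sub>m m n"
  by (rule eq_matI, auto)

lemma ctrans_uminus: "ctrans (- A) = - ctrans A"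
  by (rule eq_matI, auto)

lemma ctrans_add: "A \<in> carrier_mat n m \<Longrightarrow> B \<in> carrier_mat n m \<Longrightarrow> ctrans (A + B) = ctrans A + ctrans B"
  by (rule eq_matI, auto)

lemma ctrans_minus: "A \<in> carrier_mat n m \<Longrightarrow> B \<in> carrier_mat n m \<Longrightarrow> ctrans (A - B) = ctrans A - ctrans B"
  by (rule eq_matI, auto)

lemma ctrans_four_block:
  assumes "A \<in> carrier_mat n1 m1" "B \<in> carrier_mat n1 m2" "C \<in> carrier_mat n2 m1" "D \<in> carrier_mat n2 m2"
  shows "ctrans (four_block_mat A B C D) = four_block_mat (ctrans A) (ctrans C) (ctrans B) (ctrans D)"
  using assms by (intro eq_matI, auto)

lemma sum_split_at: assumes "k \<le> (n::nat)"
  shows "(\<Sum>j<n. f j) = (\<Sum>j<k. f j) + (\<Sum>j<n-k. f (k + j))"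
proof -
  have e: "{..<n} = {..<k} \<union> {k..<n}" using assms by auto
  have "(\<Sum>j<n. f j) = (\<Sum>j<k. f j) + (\<Sum>j\<in>{k..<n}. f j)"
    unfolding e by (subst sum.union_disjoint, auto)
  also have "(\<Sum>j\<in>{k..<n}. f j) = (\<Sum>j<n-k. f (k + j))"
    using assms by (intro sum.reindex_bij_witness[of _ "\<lambda>j. k + j" "\<lambda>j. j - k"], auto)
  finally show ?thesis .
qed

lemma qform_mult_left:
  assumes G: "G \<in> carrier_mat n m" and x: "x \<in> carrier_vec m" and M: "M \<in> carrier_mat n k"
    and y: "y \<in> carrier_vec k"
  shows "qform (G *\<^sub>v x) M y = qform x (ctrans G * M) y"
proof -
  have "qform (G *\<^sub>v x) M y = (\<Sum>i<n. cnj (\<Sum>j<m. G $$ (i,j) * x $ j) * (M *\<^sub>v y) $ i)"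
    using G x M y unfolding qform_def
    by (auto simp: scalar_prod_def lessThan_atLeast0 intro!: sum.cong)
  also have "\<dots> = (\<Sum>i<n. \<Sum>j<m. cnj (x $ j) * (cnj (G $$ (i,j)) * (M *\<^sub>v y) $ i))"
    by (simp add: sum_distrib_right sum_distrib_left mult_ac)
  also have "\<dots> = (\<Sum>j<m. \<Sum>i<n. cnj (x $ j) * (cnj (G $$ (i,j)) * (M *\<^sub>v y) $ i))"
    by (rule sum.swap)
  also have "\<dots> = qform x (ctrans G * M) y"
  proof -
    have w: "M *\<^sub>v y \<in> carrier_vec n" using M y by auto
    have e: "(ctrans G * M) *\<^sub>v y = ctrans G *\<^sub>v (M *\<^sub>v y)"
      using assoc_mult_mat_vec[OF ctrans_carrier[OF G] M y] .
    have "\<And>j. j < m \<Longrightarrow> (ctrans G *\<^sub>v (M *\<^sub>v y)) $ j = (\<Sum>i<n. cnj (G $$ (i,j)) * (M *\<^sub>v y) $ i)"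
      using G w M y by (auto simp: scalar_prod_def lessThan_atLeast0)
    thus ?thesis unfolding qform_def e using x
      by (auto simp: sum_distrib_left intro!: sum.cong)
  qed
  finally show ?thesis .
qed

lemma qform_mult_right:
  assumes "M \<in> carrier_mat n k" "G \<in> carrier_mat k p" "y \<in> carrier_vec p"
  shows "qform x M (G *\<^sub>v y) = qform x (M * G) y"
  using assms unfolding qform_def by simp

lemma qform_append:
  assumes A: "A \<in> carrier_mat n1 m1" and B: "B \<in> carrier_mat n1 m2" and C: "C \<in> carrier_mat n2 m1"
    and D: "D \<in> carrier_mat n2 m2"
    and a: "a \<in> carrier_vec n1" and b: "b \<in> carrier_vec n2"
    and u: "u \<in> carrier_vec m1" and v: "v \<in> carrier_vec m2"
  shows "qform (a @\<^sub>v b) (four_block_mat A B C D) (u @\<^sub>v v) =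
    qform a A u + qform a B v + qform b C u + qform b D v"
proof -
  have e: "four_block_mat A B C D *\<^sub>v (u @\<^sub>v v) = (A *\<^sub>v u + B *\<^sub>v v) @\<^sub>v (C *\<^sub>v u + D *\<^sub>v v)"
    by (rule four_block_mat_mult_vec[OF A B C D u v])
  have "qform (a @\<^sub>v b) (four_block_mat A B C D) (u @\<^sub>v v) =
     (\<Sum>i<n1+n2. cnj ((a @\<^sub>v b) $ i) * (((A *\<^sub>v u + B *\<^sub>v v) @\<^sub>v (C *\<^sub>v u + D *\<^sub>v v)) $ i))"
    unfolding qform_def e using a b by simp
  also have "\<dots> = (\<Sum>i<n1. cnj (a $ i) * ((A *\<^sub>v u + B *\<^sub>v v) $ i)) +
      (\<Sum>i<n2. cnj (b $ i) * ((C *\<^sub>v u + D *\<^sub>v v) $ i))"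
    by (subst sum_split_at[of n1], insert a b A B C D u v, auto)
  also have "\<dots> = qform a A u + qform a B v + qform b C u + qform b D v"
    unfolding qform_def using a b A B C D u v
    by (simp add: sum.distrib distrib_left)
  finally show ?thesis .
qed

lemma qform_zero_mat[simp]: "x \<in> carrier_vec n \<Longrightarrow> y \<in> carrier_vec m \<Longrightarrow> qform x (0\<^sub>m n m) y = 0"
  unfolding qform_def
  by (rule sum.neutral, auto simp: mult_mat_vec_def scalar_prod_def)

section \<open>Inverses and determinants\<close>

lemma left_right_inv: fixes A B :: "complex mat" assumes "A \<in> carrier_mat n n" "B \<in> carrier_mat n n" "A * B = 1\<^sub>m n"
  shows "B * A = 1\<^sub>m n"
  by (rule mat_mult_left_right_inverse[OF assms])

lemma det_ne0_of_inv: fixes A B :: "complex mat" assumes "A \<in> carrier_mat n n" "B \<in> carrier_mat n n" "A * B = 1\<^sub>m n"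
  shows "det A \<noteq> 0"
  using det_mult[OF assms(1,2)] assms(3) by auto

lemma inv_of_det_ne0: fixes A :: "complex mat" assumes A: "A \<in> carrier_mat n n" and d: "det A \<noteq> 0"
  obtains B where "B \<in> carrier_mat n n" "A * B = 1\<^sub>m n" "B * A = 1\<^sub>m n"
proof -
  from det_non_zero_imp_unit[OF A d, of "()"]
  have "A \<in> Units (ring_mat TYPE(complex) n ())" .
  then obtain B where "B \<in> carrier_mat n n" "B * A = 1\<^sub>m n" "A * B = 1\<^sub>m n"
    unfolding Units_def ring_mat_simps by auto
  thus ?thesis using that by auto
qed

lemma invertible_of_inv: fixes A B :: "complex mat" assumes "A \<in> carrier_mat n n" "B \<in> carrier_mat n n" "A * B = 1\<^sub>m n"
  shows "invertible_mat A"
proof -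
  have "B * A = 1\<^sub>m n" using left_right_inv[OF assms] .
  thus ?thesis using assms unfolding invertible_mat_def inverts_mat_def square_mat.simps
    by auto
qed

lemma invertible_of_det: fixes A :: "complex mat" assumes "A \<in> carrier_mat n n" "det A \<noteq> 0" shows "invertible_mat A"
  using inv_of_det_ne0[OF assms] invertible_of_inv[OF assms(1)] by metis

lemma det_of_invertible: fixes A :: "complex mat" assumes "A \<in> carrier_mat n n" "invertible_mat A" shows "det A \<noteq> 0"
proof -
  from assms(2) obtain B where AB: "A * B = 1\<^sub>m n" "B * A = 1\<^sub>m (dim_row B)"
    unfolding invertible_mat_def inverts_mat_def using assms(1) by auto
  have "dim_col B = n" using arg_cong[OF AB(1), of dim_col] by simp
  moreover have "dim_row B = n" using arg_cong[OF AB(2), of dim_col] assms(1) by simp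
  ultimately have "B \<in> carrier_mat n n" by auto
  thus ?thesis using det_ne0_of_inv[OF assms(1) _ AB(1)] by auto
qed

lemma minv_eq: assumes A: "A \<in> carrier_mat n n" and B: "B \<in> carrier_mat n n" and AB: "A * B = 1\<^sub>m n"
  shows "minv A = B"
proof -
  have BA: "B * A = 1\<^sub>m n" using left_right_inv[OF A B AB] .
  have dr: "dim_row A = n" using A by auto
  let ?P = "\<lambda>B'. B' \<in> carrier_mat n n \<and> A * B' = 1\<^sub>m n \<and> B' * A = 1\<^sub>m n"
  have "?P B" using B AB BA by auto
  hence P: "?P (minv A)" unfolding minv_def dr by (rule someI)
  hence P1: "minv A \<in> carrier_mat n n" and P2: "minv A * A = 1\<^sub>m n" by auto
  have "minv A = minv A * (A * B)" using P1 AB by simp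
  also have "\<dots> = (minv A * A) * B" using P1 A B by simp
  also have "\<dots> = B" using P2 B by simp
  finally show ?thesis .
qed

section \<open>hpd\<close>

lemma hpd_det: assumes "hpd n S" shows "det S \<noteq> 0"
proof
  assume "det S = 0"
  moreover have S: "S \<in> carrier_mat n n" using assms unfolding hpd_def by auto
  ultimately obtain v where v: "v \<in> carrier_vec n" "v \<noteq> 0\<^sub>v n" "S *\<^sub>v v = 0\<^sub>v n"
    using det_0_iff_vec_prod_zero_field[OF S] by auto
  have "qform v S v = 0" unfolding qform_def v(3) using v(1) by (auto intro!: sum.neutral)
  thus False using assms v unfolding hpd_def by auto
qed

lemma hpd_minv: assumes "hpd n S"
  shows "minv S \<in> carrier_mat n n" "S * minv S = 1\<^sub>m n" "minv S * S = 1\<^sub>m n"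
proof -
  have S: "S \<in> carrier_mat n n" using assms unfolding hpd_def by auto
  obtain B where B: "B \<in> carrier_mat n n" "S * B = 1\<^sub>m n" "B * S = 1\<^sub>m n"
    using inv_of_det_ne0[OF S hpd_det[OF assms]] by metis
  have "minv S = B" by (rule minv_eq[OF S B(1,2)])
  thus "minv S \<in> carrier_mat n n" "S * minv S = 1\<^sub>m n" "minv S * S = 1\<^sub>m n" using B by auto
qed

lemma ctrans_inv: fixes A B :: "complex mat" assumes "A \<in> carrier_mat n n" "B \<in> carrier_mat n n" "A * B = 1\<^sub>m n"
  shows "ctrans B * ctrans A = 1\<^sub>m n"
  using ctrans_mult[of A B] assms by auto

lemma hpd_minv_herm: assumes "hpd n S" shows "ctrans (minv S) = minv S"
proof -
  have S: "S \<in> carrier_mat n n" "ctrans S = S" using assms unfolding hpd_def by auto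
  note M = hpd_minv[OF assms]
  have "ctrans (minv S) * ctrans S = 1\<^sub>m n" using ctrans_inv[OF S(1) M(1) M(2)] .
  hence "ctrans (minv S) * S = 1\<^sub>m n" using S by simp
  hence "S * ctrans (minv S) = 1\<^sub>m n" using left_right_inv[OF ctrans_carrier[OF M(1)] S(1)] by simp
  hence "minv S = ctrans (minv S)" using minv_eq[OF S(1), of "ctrans (minv S)"] M by auto
  thus ?thesis by simp
qed

lemma hpd_congr: assumes S: "hpd n S" and G: "G \<in> carrier_mat n n" and d: "det G \<noteq> 0"
  shows "hpd n (G * S * ctrans G)"
proof -
  have Sc: "S \<in> carrier_mat n n" "ctrans S = S" using S unfolding hpd_def by auto
  obtain B where B: "B \<in> carrier_mat n n" "G * B = 1\<^sub>m n" "B * G = 1\<^sub>m n"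
    using inv_of_det_ne0[OF G d] by metis
  have BG: "ctrans G * ctrans B = 1\<^sub>m n" using ctrans_inv[OF B(1) G B(3)] .
  have "ctrans (G * S * ctrans G) = ctrans (ctrans G) * ctrans (G * S)"
    using G Sc by (intro ctrans_mult, auto)
  also have "\<dots> = G * (ctrans S * ctrans G)" using G Sc by (simp add: ctrans_mult)
  also have "\<dots> = G * S * ctrans G" using assoc_mult_mat[OF G Sc(1) ctrans_carrier[OF G]] Sc by simp
  finally have "ctrans (G * S * ctrans G) = G * S * ctrans G" .
  moreover
  { fix x :: "complex vec" assume x: "x \<in> carrier_vec n" "x \<noteq> 0\<^sub>v n"
    let ?y = "ctrans G *\<^sub>v x"
    have y: "?y \<in> carrier_vec n" using mult_mat_vec_carrier[OF ctrans_carrier[OF G] x(1)] .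
    have "?y \<noteq> 0\<^sub>v n"
    proof
      assume "?y = 0\<^sub>v n"
      hence "ctrans B *\<^sub>v ?y = 0\<^sub>v n" using B by auto
      moreover have "ctrans B *\<^sub>v ?y = x"
      proof -
        have "ctrans B * ctrans G = 1\<^sub>m n" using left_right_inv[OF _ _ BG] G B by auto
        thus ?thesis using assoc_mult_mat_vec[OF ctrans_carrier[OF B(1)] ctrans_carrier[OF G] x(1)] x(1) by simp
      qed
      ultimately show False using x by auto
    qed
    hence "Re (qform ?y S ?y) > 0" using S y unfolding hpd_def by auto
    also have "qform ?y S ?y = qform x (G * S) ?y"
      using qform_mult_left[of "ctrans G" n n x S n ?y] G x Sc y by auto
    also have "\<dots> = qform x (G * S * ctrans G) x"
      using qform_mult_right[of "G * S" n n "ctrans G" n x x] G Sc x by auto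
    finally have "Re (qform x (G * S * ctrans G) x) > 0" .
  }
  ultimately show ?thesis using G Sc unfolding hpd_def by auto
qed



section \<open>Sub-blocks\<close>

lemma subm_carrier[simp]: "subm S a b c d \<in> carrier_mat (b - a) (d - c)"
  unfolding subm_def by auto

lemma subm_dims[simp]: "dim_row (subm S a b c d) = b - a" "dim_col (subm S a b c d) = d - c"
  unfolding subm_def by auto

lemma subm_index[simp]: "i < b - a \<Longrightarrow> j < d - c \<Longrightarrow> subm S a b c d $$ (i,j) = S $$ (a + i, c + j)"
  unfolding subm_def by auto

lemma subv_carrier[simp]: "subv z a b \<in> carrier_vec (b - a)"
  unfolding subv_def by auto

lemma subv_dim[simp]: "dim_vec (subv z a b) = b - a"
  unfolding subv_def by auto

lemma subv_index[simp]: "i < b - a \<Longrightarrow> subv z a b $ i = z $ (a + i)"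
  unfolding subv_def by auto

lemma split_sub: assumes S: "S \<in> carrier_mat n n" and k: "k \<le> n"
  shows "S = four_block_mat (subm S 0 k 0 k) (subm S 0 k k n) (subm S k n 0 k) (subm S k n k n)"
  using S k by (intro eq_matI, auto)

lemma split_subv: assumes z: "z \<in> carrier_vec n" and k: "k \<le> n"
  shows "z = subv z 0 k @\<^sub>v subv z k n"
  using z k by (intro eq_vecI, auto)

lemma subm_subm: assumes "b' \<le> b - a" "d' \<le> d - c"
  shows "subm (subm S a b c d) a' b' c' d' = subm S (a + a') (a + b') (c + c') (c + d')"
  using assms by (intro eq_matI, auto simp: add.assoc)

lemma subv_subv: assumes "b' \<le> b - a"
  shows "subv (subv z a b) a' b' = subv z (a + a') (a + b')"
  using assms by (intro eq_vecI, auto simp: add.assoc)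

lemma subm_ctrans: assumes "S \<in> carrier_mat n m" "b \<le> m" "d \<le> n"
  shows "subm (ctrans S) a b c d = ctrans (subm S c d a b)"
  using assms by (intro eq_matI, auto)

lemma subm_four_block:
  assumes A: "A \<in> carrier_mat k k" and B: "B \<in> carrier_mat k l" and C: "C \<in> carrier_mat l k"
    and D: "D \<in> carrier_mat l l"
  shows "subm (four_block_mat A B C D) 0 k 0 k = A"
    "subm (four_block_mat A B C D) k (k+l) k (k+l) = D"
  using assms by (intro eq_matI, auto)+

lemma subv_add: "a \<in> carrier_vec n \<Longrightarrow> f \<in> carrier_vec n \<Longrightarrow> k' \<le> n \<Longrightarrow>
   subv (a + f) k k' = subv a k k' + subv f k k'"
  by (intro eq_vecI, auto)

definition llz :: "complex mat \<Rightarrow> nat \<Rightarrow> nat \<Rightarrow> bool" where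
  "llz G k n \<longleftrightarrow> (\<forall>i j. k \<le> i \<longrightarrow> i < n \<longrightarrow> j < k \<longrightarrow> G $$ (i,j) = 0)"

lemma tail_mult: assumes G: "G \<in> carrier_mat n n" and k: "k \<le> n" and l: "llz G k n"
  and A: "A \<in> carrier_mat n p" and cd: "c \<le> d" "d \<le> p"
  shows "subm (G * A) k n c d = subm G k n k n * subm A k n c d"
proof (rule eq_matI)
  fix i j assume i: "i < dim_row (subm G k n k n * subm A k n c d)"
    and j: "j < dim_col (subm G k n k n * subm A k n c d)"
  hence i': "i < n - k" and j': "j < d - c" by auto
  have "subm (G * A) k n c d $$ (i,j) = (\<Sum>q<n. G $$ (k+i, q) * A $$ (q, c+j))"
    using i' j' G A cd by (auto simp: scalar_prod_def lessThan_atLeast0)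
  also have "\<dots> = (\<Sum>q<k. G $$ (k+i, q) * A $$ (q, c+j)) + (\<Sum>q<n-k. G $$ (k+i, k+q) * A $$ (k+q, c+j))"
    by (rule sum_split_at[OF k])
  also have "(\<Sum>q<k. G $$ (k+i, q) * A $$ (q, c+j)) = 0"
    using l i' unfolding llz_def by (auto intro!: sum.neutral)
  also have "(\<Sum>q<n-k. G $$ (k+i, k+q) * A $$ (k+q, c+j)) = (subm G k n k n * subm A k n c d) $$ (i,j)"
    using i' j' by (auto simp: scalar_prod_def lessThan_atLeast0)
  finally show "subm (G * A) k n c d $$ (i,j) = (subm G k n k n * subm A k n c d) $$ (i,j)" by simp
qed auto

lemma tail_mult_vec: assumes G: "G \<in> carrier_mat n n" and k: "k \<le> n" and l: "llz G k n"
  and z: "z \<in> carrier_vec n"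
  shows "subv (G *\<^sub>v z) k n = subm G k n k n *\<^sub>v subv z k n"
proof (rule eq_vecI)
  fix i assume i: "i < dim_vec (subm G k n k n *\<^sub>v subv z k n)"
  hence i': "i < n - k" by auto
  have "subv (G *\<^sub>v z) k n $ i = (\<Sum>q<n. G $$ (k+i, q) * z $ q)"
    using i' G z by (auto simp: scalar_prod_def lessThan_atLeast0)
  also have "\<dots> = (\<Sum>q<k. G $$ (k+i, q) * z $ q) + (\<Sum>q<n-k. G $$ (k+i, k+q) * z $ (k+q))"
    by (rule sum_split_at[OF k])
  also have "(\<Sum>q<k. G $$ (k+i, q) * z $ q) = 0"
    using l i' unfolding llz_def by (auto intro!: sum.neutral)
  also have "(\<Sum>q<n-k. G $$ (k+i, k+q) * z $ (k+q)) = (subm G k n k n *\<^sub>v subv z k n) $ i"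
    using i' by (auto simp: scalar_prod_def lessThan_atLeast0)
  finally show "subv (G *\<^sub>v z) k n $ i = (subm G k n k n *\<^sub>v subv z k n) $ i" by simp
qed auto

lemma tail_congr: assumes G: "G \<in> carrier_mat n n" and k: "k \<le> n" and l: "llz G k n"
  and S: "S \<in> carrier_mat n n"
  shows "subm (G * S * ctrans G) k n k n = subm G k n k n * subm S k n k n * ctrans (subm G k n k n)"
proof -
  have GS: "G * S \<in> carrier_mat n n" using G S by auto
  have GSG: "ctrans (G * S * ctrans G) \<in> carrier_mat n n" using G S by auto
  have "subm (G * S * ctrans G) k n k n = ctrans (subm (ctrans (G * S * ctrans G)) k n k n)"
    using subm_ctrans[where S="ctrans (G * S * ctrans G)" and n=n and m=n and a=k and b=n and c=k and d=n] GSG k by simp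
  also have "ctrans (G * S * ctrans G) = G * (ctrans S * ctrans G)"
    using G S by (simp add: ctrans_mult)
  also have "subm (G * (ctrans S * ctrans G)) k n k n = subm G k n k n * subm (ctrans S * ctrans G) k n k n"
    by (rule tail_mult[OF G k l], insert G S k, auto)
  also have "ctrans S * ctrans G = ctrans (G * S)" using G S by (simp add: ctrans_mult)
  also have "subm (ctrans (G * S)) k n k n = ctrans (subm (G * S) k n k n)"
    using subm_ctrans[OF GS, where a=k and b=n and c=k and d=n] k by simp
  also have "subm (G * S) k n k n = subm G k n k n * subm S k n k n"
    by (rule tail_mult[OF G k l S], insert k, auto)
  also have "ctrans (subm G k n k n * ctrans (subm G k n k n * subm S k n k n))
     = ctrans (ctrans (subm G k n k n * subm S k n k n)) * ctrans (subm G k n k n)"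
    by (rule ctrans_mult, simp)
  finally show ?thesis by simp
qed

lemma det_split: assumes G: "G \<in> carrier_mat n n" and k: "k \<le> n" and l: "llz G k n"
  shows "det G = det (subm G 0 k 0 k) * det (subm G k n k n)"
proof -
  have z: "subm G k n 0 k = 0\<^sub>m (n - k) k"
    using l k unfolding llz_def by (intro eq_matI, auto)
  have "det G = det (four_block_mat (subm G 0 k 0 k) (subm G 0 k k n) (subm G k n 0 k) (subm G k n k n))"
    using split_sub[OF G k] by simp
  also have "\<dots> = det (subm G 0 k 0 k) * det (subm G k n k n)"
    by (rule det_four_block_mat_lower_left_zero[OF _ _ z], auto)
  finally show ?thesis .
qed

lemma qform_zero_left[simp]: "qform (0\<^sub>v n) A y = 0"
  unfolding qform_def by simp

lemma qform_zero_right[simp]: "dim_col A = m \<Longrightarrow> dim_vec x \<le> dim_row A \<Longrightarrow> qform x A (0\<^sub>v m) = 0"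
  unfolding qform_def by (auto intro!: sum.neutral)

lemma hpd_sub: assumes S: "hpd n S" and k: "k \<le> n"
  shows "hpd k (subm S 0 k 0 k)" "hpd (n - k) (subm S k n k n)"
proof -
  have Sc: "S \<in> carrier_mat n n" "ctrans S = S" using S unfolding hpd_def by auto
  note sp = split_sub[OF Sc(1) k]
  let ?A = "subm S 0 k 0 k" and ?B = "subm S 0 k k n" and ?C = "subm S k n 0 k" and ?D = "subm S k n k n"
  have nn: "n = k + (n - k)" using k by simp
  have z0: "0\<^sub>v k @\<^sub>v 0\<^sub>v (n - k) = (0\<^sub>v n :: complex vec)" using k by (intro eq_vecI, auto)
  { fix x :: "complex vec" assume x: "x \<in> carrier_vec k" "x \<noteq> 0\<^sub>v k"
    have y: "x @\<^sub>v 0\<^sub>v (n - k) \<in> carrier_vec n" using append_carrier_vec[OF x(1), of "0\<^sub>v (n - k)" "n - k"] nn by auto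
    have "x @\<^sub>v 0\<^sub>v (n - k) \<noteq> 0\<^sub>v n"
    proof
      assume "x @\<^sub>v 0\<^sub>v (n - k) = 0\<^sub>v n"
      hence "x @\<^sub>v 0\<^sub>v (n - k) = 0\<^sub>v k @\<^sub>v 0\<^sub>v (n - k)" using z0 by simp
      hence "x = 0\<^sub>v k" using append_vec_eq[OF x(1)] by auto
      thus False using x by auto
    qed
    hence "0 < Re (qform (x @\<^sub>v 0\<^sub>v (n - k)) S (x @\<^sub>v 0\<^sub>v (n - k)))" using S y unfolding hpd_def by auto
    also have "qform (x @\<^sub>v 0\<^sub>v (n - k)) S (x @\<^sub>v 0\<^sub>v (n - k)) = qform x ?A x"
      by (subst sp, subst qform_append, insert x, auto)
    finally have "0 < Re (qform x ?A x)" .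
  }
  moreover have "ctrans ?A = ?A" using subm_ctrans[OF Sc(1), of k k 0 0] k Sc(2) by simp
  ultimately show "hpd k ?A" unfolding hpd_def by auto
  { fix x :: "complex vec" assume x: "x \<in> carrier_vec (n - k)" "x \<noteq> 0\<^sub>v (n - k)"
    have y: "0\<^sub>v k @\<^sub>v x \<in> carrier_vec n" using append_carrier_vec[OF _ x(1), of "0\<^sub>v k" k] nn by auto
    have "0\<^sub>v k @\<^sub>v x \<noteq> 0\<^sub>v n"
    proof
      assume "0\<^sub>v k @\<^sub>v x = 0\<^sub>v n"
      hence "0\<^sub>v k @\<^sub>v x = 0\<^sub>v k @\<^sub>v 0\<^sub>v (n - k)" using z0 by simp
      hence "x = 0\<^sub>v (n - k)" using append_vec_eq[of "0\<^sub>v k" k "0\<^sub>v k" x "0\<^sub>v (n - k)"] by auto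
      thus False using x by auto
    qed
    hence "0 < Re (qform (0\<^sub>v k @\<^sub>v x) S (0\<^sub>v k @\<^sub>v x))" using S y unfolding hpd_def by auto
    also have "qform (0\<^sub>v k @\<^sub>v x) S (0\<^sub>v k @\<^sub>v x) = qform x ?D x"
      by (subst sp, subst qform_append, insert x, auto)
    finally have "0 < Re (qform x ?D x)" .
  }
  moreover have "ctrans ?D = ?D" using subm_ctrans[OF Sc(1), of n n k k] k Sc(2) by simp
  ultimately show "hpd (n - k) ?D" unfolding hpd_def by auto
qed



lemma mult_one_cancel: fixes A B X :: "complex mat" assumes "A \<in> carrier_mat n m" "B \<in> carrier_mat m n" "A * B = 1\<^sub>m n"
  "X \<in> carrier_mat n p"
  shows "A * (B * X) = X"
proof -
  show ?thesis using assoc_mult_mat[OF assms(1,2,4)] assms(3,4) by simp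
qed

lemma add_uminus_zero_mat: "(A :: complex mat) \<in> carrier_mat n m \<Longrightarrow> A + - A = 0\<^sub>m n m"
  by (intro eq_matI, auto)

lemma zero_mult_vec: "v \<in> carrier_vec m \<Longrightarrow> 0\<^sub>m n m *\<^sub>v v = 0\<^sub>v n"
  by (intro eq_vecI, auto simp: scalar_prod_def)

lemma Q1: assumes H: "H \<in> carrier_mat n n" and d: "det H \<noteq> 0" and T: "hpd n T"
  and w: "w \<in> carrier_vec n"
  shows "qform (H *\<^sub>v w) (minv (H * T * ctrans H)) (H *\<^sub>v w) = qform w (minv T) w"
proof -
  obtain Hi where Hi: "Hi \<in> carrier_mat n n" "H * Hi = 1\<^sub>m n" "Hi * H = 1\<^sub>m n"
    using inv_of_det_ne0[OF H d] by metis
  have Tc: "T \<in> carrier_mat n n" using T unfolding hpd_def by auto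
  note Ti = hpd_minv[OF T]
  define Mi where "Mi = minv T"
  have Mi: "Mi \<in> carrier_mat n n" "T * Mi = 1\<^sub>m n" using Ti unfolding Mi_def by auto
  have c1: "ctrans H * ctrans Hi = 1\<^sub>m n" using ctrans_inv[OF Hi(1) H Hi(3)] .
  have cH: "ctrans H \<in> carrier_mat n n" "ctrans Hi \<in> carrier_mat n n" using H Hi by auto
  have "(H * T * ctrans H) * (ctrans Hi * Mi * Hi) = H * (T * (ctrans H * (ctrans Hi * (Mi * Hi))))"
    using H Tc cH Mi Hi by (simp add: assoc_mult_mat[of _ n n _ n _ n] mult_carrier_mat[of _ n n _ n])
  also have "ctrans H * (ctrans Hi * (Mi * Hi)) = Mi * Hi"
    by (rule mult_one_cancel[OF cH(1) cH(2) c1], insert Mi Hi, auto)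
  also have "T * (Mi * Hi) = Hi" by (rule mult_one_cancel[OF Tc Mi(1) Mi(2) Hi(1)])
  finally have "(H * T * ctrans H) * (ctrans Hi * Mi * Hi) = 1\<^sub>m n" using Hi by simp
  hence m: "minv (H * T * ctrans H) = ctrans Hi * Mi * Hi"
    by (intro minv_eq, insert H Tc cH Mi Hi, auto)
  have "qform (H *\<^sub>v w) (ctrans Hi * Mi * Hi) (H *\<^sub>v w) = qform w (ctrans H * (ctrans Hi * Mi * Hi)) (H *\<^sub>v w)"
    by (rule qform_mult_left[OF H w], insert cH Mi Hi H w, auto)
  also have "\<dots> = qform w (ctrans H * (ctrans Hi * Mi * Hi) * H) w"
    by (rule qform_mult_right, insert cH Mi Hi H w, auto)
  also have "ctrans H * (ctrans Hi * Mi * Hi) * H = ctrans H * (ctrans Hi * (Mi * (Hi * H)))"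
    using cH Mi Hi H by (simp add: assoc_mult_mat[of _ n n _ n _ n] mult_carrier_mat[of _ n n _ n])
  also have "\<dots> = Mi" unfolding Hi(3) using mult_one_cancel[OF cH(1) cH(2) c1, of Mi] Mi by simp
  finally show ?thesis unfolding m Mi_def .
qed

lemma schur:
  fixes A B C D :: "complex mat"
  assumes A: "A \<in> carrier_mat k k" and B: "B \<in> carrier_mat k l" and C: "C \<in> carrier_mat l k"
    and D: "D \<in> carrier_mat l l" and T: "hpd (k+l) (four_block_mat A B C D)"
  shows "hpd l D" "hpd k (A - B * minv D * C)"
    "\<And>u v. u \<in> carrier_vec k \<Longrightarrow> v \<in> carrier_vec l \<Longrightarrow>
      qform (u @\<^sub>v v) (minv (four_block_mat A B C D)) (u @\<^sub>v v) =
      qform (u - B *\<^sub>v (minv D *\<^sub>v v)) (minv (A - B * minv D * C)) (u - B *\<^sub>v (minv D *\<^sub>v v))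
      + qform v (minv D) v"
proof -
  define T' where "T' = four_block_mat A B C D"
  have T'c: "T' \<in> carrier_mat (k+l) (k+l)" unfolding T'_def using A D by auto
  have hT: "hpd (k+l) T'" using T unfolding T'_def .
  have herm: "ctrans T' = T'" using hT unfolding hpd_def by auto
  show hD: "hpd l D" using hpd_sub(2)[OF T, of k] subm_four_block(2)[OF A B C D] by simp
  have CB: "C = ctrans B"
  proof (rule eq_matI)
    fix i j assume ij: "i < dim_row (ctrans B)" "j < dim_col (ctrans B)"
    hence i: "i < l" and j: "j < k" using B by auto
    have "C $$ (i,j) = T' $$ (k+i, j)" unfolding T'_def using A B C D i j by simp
    also have "\<dots> = ctrans T' $$ (k+i, j)" using herm by simp
    also have "\<dots> = cnj (T' $$ (j, k+i))" using T'c i j by simp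
    also have "\<dots> = cnj (B $$ (j, i))" unfolding T'_def using A B C D i j by simp
    finally show "C $$ (i,j) = ctrans B $$ (i,j)" using B i j by simp
  qed (insert B C, auto)
  define Di where "Di = minv D"
  have Di: "Di \<in> carrier_mat l l" "D * Di = 1\<^sub>m l" "Di * D = 1\<^sub>m l" "ctrans Di = Di"
    using hpd_minv[OF hD] hpd_minv_herm[OF hD] unfolding Di_def by auto
  define E where "E = B * Di"
  have E: "E \<in> carrier_mat k l" unfolding E_def using B Di by auto
  define Sc where "Sc = A - E * C"
  have Sc_eq: "A - B * minv D * C = Sc" unfolding Sc_def E_def Di_def ..
  have Scc: "Sc \<in> carrier_mat k k" unfolding Sc_def using A E C by auto
  define G0 where "G0 = four_block_mat (1\<^sub>m k) (- E) (0\<^sub>m l k) (1\<^sub>m l)"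
  define G0i where "G0i = four_block_mat (1\<^sub>m k) E (0\<^sub>m l k) (1\<^sub>m l)"
  have G0c: "G0 \<in> carrier_mat (k+l) (k+l)" unfolding G0_def by auto
  have G0ic: "G0i \<in> carrier_mat (k+l) (k+l)" unfolding G0i_def by auto
  have "G0 * G0i = four_block_mat (1\<^sub>m k * 1\<^sub>m k + (- E) * 0\<^sub>m l k) (1\<^sub>m k * E + (- E) * 1\<^sub>m l)
      (0\<^sub>m l k * 1\<^sub>m k + 1\<^sub>m l * 0\<^sub>m l k) (0\<^sub>m l k * E + 1\<^sub>m l * 1\<^sub>m l)"
    unfolding G0_def G0i_def by (rule mult_four_block_mat, insert E, auto)
  also have "\<dots> = four_block_mat (1\<^sub>m k) (0\<^sub>m k l) (0\<^sub>m l k) (1\<^sub>m l)"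
    using E by (simp add: add_uminus_zero_mat)
  finally have GG: "G0 * G0i = 1\<^sub>m (k+l)" by simp
  have dG: "det G0 \<noteq> 0" by (rule det_ne0_of_inv[OF G0c G0ic GG])
  have ED: "E * D = B" unfolding E_def using B Di D by simp
  have G0T: "G0 * T' = four_block_mat Sc (0\<^sub>m k l) C D"
  proof -
    have "G0 * T' = four_block_mat (1\<^sub>m k * A + (- E) * C) (1\<^sub>m k * B + (- E) * D)
      (0\<^sub>m l k * A + 1\<^sub>m l * C) (0\<^sub>m l k * B + 1\<^sub>m l * D)"
      unfolding G0_def T'_def by (rule mult_four_block_mat, insert A B C D E, auto)
    also have "\<dots> = four_block_mat Sc (0\<^sub>m k l) C D"
    proof (rule cong_four_block_mat)
      show "1\<^sub>m k * A + - E * C = Sc" unfolding Sc_def using A E C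
        by (simp add: add_uminus_minus_mat[of A k k "E * C"])
      show "1\<^sub>m k * B + - E * D = 0\<^sub>m k l" using B E D ED by (simp add: add_uminus_zero_mat)
    qed (insert A B C D, auto)
    finally show ?thesis .
  qed
  have cE: "ctrans E = Di * C" unfolding E_def CB using ctrans_mult[of B Di] B Di by simp
  have cG0: "ctrans G0 = four_block_mat (1\<^sub>m k) (0\<^sub>m k l) (- (Di * C)) (1\<^sub>m l)"
    unfolding G0_def using ctrans_four_block[of "1\<^sub>m k" k k "- E" l "0\<^sub>m l k" l "1\<^sub>m l"] E
    by (simp add: ctrans_uminus cE)
  have P: "G0 * T' * ctrans G0 = four_block_mat Sc (0\<^sub>m k l) (0\<^sub>m l k) D"
  proof -
    have "G0 * T' * ctrans G0 = four_block_mat (Sc * 1\<^sub>m k + 0\<^sub>m k l * - (Di * C)) (Sc * 0\<^sub>m k l + 0\<^sub>m k l * 1\<^sub>m l)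
       (C * 1\<^sub>m k + D * - (Di * C)) (C * 0\<^sub>m k l + D * 1\<^sub>m l)"
      unfolding G0T cG0 by (rule mult_four_block_mat, insert Scc C D Di, auto)
    also have "\<dots> = four_block_mat Sc (0\<^sub>m k l) (0\<^sub>m l k) D"
    proof (rule cong_four_block_mat)
      have "D * (Di * C) = C" by (rule mult_one_cancel[OF D Di(1) Di(2) C])
      thus "C * 1\<^sub>m k + D * - (Di * C) = 0\<^sub>m l k" using C D Di by (simp add: add_uminus_zero_mat)
    qed (insert Scc C D Di, auto)
    finally show ?thesis .
  qed
  have hP: "hpd (k+l) (four_block_mat Sc (0\<^sub>m k l) (0\<^sub>m l k) D)"
    using hpd_congr[OF hT G0c dG] unfolding P .
  have hSc: "hpd k Sc" using hpd_sub(1)[OF hP, of k] subm_four_block(1)[OF Scc _ _ D, of "0\<^sub>m k l" "0\<^sub>m l k"] by simp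
  thus "hpd k (A - B * minv D * C)" unfolding Sc_eq .
  fix u v :: "complex vec" assume u: "u \<in> carrier_vec k" and v: "v \<in> carrier_vec l"
  have Ev: "E *\<^sub>v v = B *\<^sub>v (minv D *\<^sub>v v)" unfolding E_def Di_def using B Di v Di_def by simp
  have Evc: "E *\<^sub>v v \<in> carrier_vec k" using E v by auto
  have Gw: "G0 *\<^sub>v (u @\<^sub>v v) = (u - E *\<^sub>v v) @\<^sub>v v"
  proof -
    have "G0 *\<^sub>v (u @\<^sub>v v) = (1\<^sub>m k *\<^sub>v u + (- E) *\<^sub>v v) @\<^sub>v (0\<^sub>m l k *\<^sub>v u + 1\<^sub>m l *\<^sub>v v)"
      unfolding G0_def by (rule four_block_mat_mult_vec, insert E u v, auto)
    also have "1\<^sub>m k *\<^sub>v u + (- E) *\<^sub>v v = u - E *\<^sub>v v"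
      using u v E Evc by (intro eq_vecI, auto)
    also have "0\<^sub>m l k *\<^sub>v u + 1\<^sub>m l *\<^sub>v v = v" using u v by (simp add: zero_mult_vec)
    finally show ?thesis .
  qed
  define Sci where "Sci = minv Sc"
  have Sci: "Sci \<in> carrier_mat k k" "Sc * Sci = 1\<^sub>m k" using hpd_minv[OF hSc] unfolding Sci_def by auto
  have mP: "minv (four_block_mat Sc (0\<^sub>m k l) (0\<^sub>m l k) D) = four_block_mat Sci (0\<^sub>m k l) (0\<^sub>m l k) Di"
  proof (rule minv_eq)
    have "four_block_mat Sc (0\<^sub>m k l) (0\<^sub>m l k) D * four_block_mat Sci (0\<^sub>m k l) (0\<^sub>m l k) Di =
      four_block_mat (Sc * Sci + 0\<^sub>m k l * 0\<^sub>m l k) (Sc * 0\<^sub>m k l + 0\<^sub>m k l * Di)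
        (0\<^sub>m l k * Sci + D * 0\<^sub>m l k) (0\<^sub>m l k * 0\<^sub>m k l + D * Di)"
      by (rule mult_four_block_mat, insert Scc Sci D Di, auto)
    also have "\<dots> = 1\<^sub>m (k+l)" using Scc Sci D Di by simp
    finally show "four_block_mat Sc (0\<^sub>m k l) (0\<^sub>m l k) D * four_block_mat Sci (0\<^sub>m k l) (0\<^sub>m l k) Di = 1\<^sub>m (k+l)" .
  qed (insert Scc Sci D Di, auto)
  have w: "u @\<^sub>v v \<in> carrier_vec (k+l)" using u v by auto
  have "qform (u @\<^sub>v v) (minv T') (u @\<^sub>v v) = qform (G0 *\<^sub>v (u @\<^sub>v v)) (minv (G0 * T' * ctrans G0)) (G0 *\<^sub>v (u @\<^sub>v v))"
    using Q1[OF G0c dG hT w] by simp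
  also have "\<dots> = qform ((u - E *\<^sub>v v) @\<^sub>v v) (four_block_mat Sci (0\<^sub>m k l) (0\<^sub>m l k) Di) ((u - E *\<^sub>v v) @\<^sub>v v)"
    unfolding Gw P mP ..
  also have "\<dots> = qform (u - E *\<^sub>v v) Sci (u - E *\<^sub>v v) + qform v Di v"
    by (subst qform_append, insert Sci Di u v Evc, auto)
  finally show "qform (u @\<^sub>v v) (minv (four_block_mat A B C D)) (u @\<^sub>v v) =
      qform (u - B *\<^sub>v (minv D *\<^sub>v v)) (minv (A - B * minv D * C)) (u - B *\<^sub>v (minv D *\<^sub>v v))
      + qform v (minv D) v" unfolding T'_def Sc_eq Sci_def Di_def Ev[unfolded Di_def] .
qed



lemma subv_carrier_iff[simp]: "subv z a b \<in> carrier_vec n \<longleftrightarrow> b - a = n"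
  unfolding carrier_vec_def by auto

lemma subm_carrier_iff[simp]: "subm S a b c d \<in> carrier_mat n m \<longleftrightarrow> b - a = n \<and> d - c = m"
  unfolding carrier_mat_def by auto

definition sq :: "nat \<Rightarrow> nat \<Rightarrow> complex vec \<Rightarrow> complex mat \<Rightarrow> complex" where
  "sq N k z S = qform (subv z k N) (minv (subm S k N k N)) (subv z k N)"

lemma t1_eq:
  assumes z: "z \<in> carrier_vec N" and S: "hpd N S" and tr: "t + r \<le> N"
  shows "t + r < N \<Longrightarrow> t1 N t r (z,S) = [sq N t z S - sq N (t+r) z S, sq N (t+r) z S]"
    "t + r = N \<Longrightarrow> t1 N t r (z,S) = [sq N t z S]"
proof -
  assume mN: "t + r = N"
  thus "t1 N t r (z,S) = [sq N t z S]" unfolding t1_def sq_def Let_def by simp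
next
  assume mN: "t + r < N"
  let ?m = "t + r"
  define T where "T = subm S t N t N"
  define w where "w = subv z t N"
  have Sc: "S \<in> carrier_mat N N" using S unfolding hpd_def by auto
  have hT: "hpd (N - t) T" unfolding T_def using hpd_sub(2)[OF S, of t] tr by simp
  have Tc: "T \<in> carrier_mat (N - t) (N - t)" unfolding T_def by simp
  have rl: "r \<le> N - t" using tr by simp
  have e1: "subm T 0 r 0 r = subm S t ?m t ?m" unfolding T_def by (subst subm_subm, insert rl, auto)
  have e2: "subm T 0 r r (N - t) = subm S t ?m ?m N" unfolding T_def by (subst subm_subm, insert rl tr, auto)
  have e3: "subm T r (N - t) 0 r = subm S ?m N t ?m" unfolding T_def by (subst subm_subm, insert rl tr, auto)
  have e4: "subm T r (N - t) r (N - t) = subm S ?m N ?m N" unfolding T_def by (subst subm_subm, insert rl tr, auto)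
  have v1: "subv w 0 r = subv z t ?m" unfolding w_def by (subst subv_subv, insert rl, auto)
  have v2: "subv w r (N - t) = subv z ?m N" unfolding w_def by (subst subv_subv, insert rl tr, auto)
  have NT: "N - t = r + (N - ?m)" using tr mN by simp
  have Tsplit: "T = four_block_mat (subm S t ?m t ?m) (subm S t ?m ?m N) (subm S ?m N t ?m) (subm S ?m N ?m N)"
    using split_sub[OF Tc rl] unfolding e1 e2 e3 e4 .
  have "w = subv w 0 r @\<^sub>v subv w r (N - t)"
    by (rule split_subv[OF _ rl], simp add: w_def)
  hence wsplit: "w = subv z t ?m @\<^sub>v subv z ?m N" unfolding v1 v2 .
  have hT': "hpd (r + (N - ?m)) (four_block_mat (subm S t ?m t ?m) (subm S t ?m ?m N) (subm S ?m N t ?m) (subm S ?m N ?m N))"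
    using hT unfolding Tsplit NT .
  have cs: "subm S t ?m t ?m \<in> carrier_mat r r" "subm S t ?m ?m N \<in> carrier_mat r (N - ?m)"
    "subm S ?m N t ?m \<in> carrier_mat (N - ?m) r" "subm S ?m N ?m N \<in> carrier_mat (N - ?m) (N - ?m)"
    using subm_carrier by auto
  have "sq N t z S = qform w (minv T) w" unfolding sq_def T_def w_def ..
  also have "\<dots> = qform (subv z t ?m - subm S t ?m ?m N *\<^sub>v (minv (subm S ?m N ?m N) *\<^sub>v subv z ?m N))
      (minv (subm S t ?m t ?m - subm S t ?m ?m N * minv (subm S ?m N ?m N) * subm S ?m N t ?m))
      (subv z t ?m - subm S t ?m ?m N *\<^sub>v (minv (subm S ?m N ?m N) *\<^sub>v subv z ?m N))
    + qform (subv z ?m N) (minv (subm S ?m N ?m N)) (subv z ?m N)"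
    unfolding Tsplit wsplit by (rule schur(3)[OF cs hT'], auto)
  finally have "sq N t z S = qform (subv z t ?m - subm S t ?m ?m N *\<^sub>v (minv (subm S ?m N ?m N) *\<^sub>v subv z ?m N))
      (minv (subm S t ?m t ?m - subm S t ?m ?m N * minv (subm S ?m N ?m N) * subm S ?m N t ?m))
      (subv z t ?m - subm S t ?m ?m N *\<^sub>v (minv (subm S ?m N ?m N) *\<^sub>v subv z ?m N))
    + sq N ?m z S" unfolding sq_def .
  thus "t1 N t r (z,S) = [sq N t z S - sq N (t+r) z S, sq N (t+r) z S]"
    unfolding t1_def Let_def using mN by (simp add: sq_def)
qed

lemma Gset_btri: "G \<in> Gset N t r \<Longrightarrow> i < N \<Longrightarrow> j < N \<Longrightarrow> blk t (t + r) j < blk t (t + r) i \<Longrightarrow> G $$ (i,j) = 0"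
  unfolding Gset_def by auto

lemma sq_inv:
  assumes G: "G \<in> carrier_mat N N" and dG: "det G \<noteq> 0" and k: "t \<le> k" "k \<le> N" and l: "llz G k N"
    and f: "f \<in> Fset N t" and z: "z \<in> carrier_vec N" and S: "hpd N S"
  shows "sq N k (G *\<^sub>v z + f) (G * S * ctrans G) = sq N k z S"
proof -
  have Sc: "S \<in> carrier_mat N N" using S unfolding hpd_def by auto
  have fc: "f \<in> carrier_vec N" using f unfolding Fset_def by auto
  have f0: "subv f k N = 0\<^sub>v (N - k)" using f k unfolding Fset_def by (intro eq_vecI, auto)
  have v: "subv (G *\<^sub>v z + f) k N = subm G k N k N *\<^sub>v subv z k N"
    using subv_add[of "G *\<^sub>v z" N f N k] G z fc tail_mult_vec[OF G k(2) l z] f0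
      right_zero_vec[OF mult_mat_vec_carrier[OF subm_carrier subv_carrier]] by simp
  have m: "subm (G * S * ctrans G) k N k N = subm G k N k N * subm S k N k N * ctrans (subm G k N k N)"
    by (rule tail_congr[OF G k(2) l Sc])
  have d: "det (subm G k N k N) \<noteq> 0" using det_split[OF G k(2) l] dG by auto
  show ?thesis unfolding sq_def v m
    by (rule Q1[OF _ d hpd_sub(2)[OF S k(2)]], auto)
qed

lemma invariance:
  assumes tr: "1 \<le> t" "t + r \<le> N" and G: "G \<in> Gset N t r" and f: "f \<in> Fset N t"
    and z: "z \<in> carrier_vec N" and S: "hpd N S"
  shows "t1 N t r (act (G,f) (z,S)) = t1 N t r (z,S)"
proof -
  have Gc: "G \<in> carrier_mat N N" and iG: "invertible_mat G" using G unfolding Gset_def by auto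
  have dG: "det G \<noteq> 0" by (rule det_of_invertible[OF Gc iG])
  have fc: "f \<in> carrier_vec N" using f unfolding Fset_def by auto
  have ac: "act (G,f) (z,S) = (G *\<^sub>v z + f, G * S * ctrans G)" unfolding act_def by simp
  have z': "G *\<^sub>v z + f \<in> carrier_vec N" using Gc z fc by auto
  have S': "hpd N (G * S * ctrans G)" by (rule hpd_congr[OF S Gc dG])
  have lt: "llz G t N" unfolding llz_def
  proof (intro allI impI)
    fix i j assume "t \<le> i" "i < N" "j < t"
    thus "G $$ (i,j) = 0" using Gset_btri[OF G, of i j] unfolding blk_def by auto
  qed
  have lm: "llz G (t + r) N" unfolding llz_def
  proof (intro allI impI)
    fix i j assume "t + r \<le> i" "i < N" "j < t + r"
    thus "G $$ (i,j) = 0" using Gset_btri[OF G, of i j] unfolding blk_def by auto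
  qed
  note i1 = sq_inv[OF Gc dG _ tr(2) lm f z S]
  note i2 = sq_inv[OF Gc dG _ _ lt f z S]
  show ?thesis
  proof (cases "t + r < N")
    case True
    show ?thesis unfolding ac t1_eq(1)[OF z' S' tr(2) True] t1_eq(1)[OF z S tr(2) True]
      using i1 i2 tr by simp
  next
    case False
    hence e: "t + r = N" using tr by simp
    show ?thesis unfolding ac t1_eq(2)[OF z' S' tr(2) e] t1_eq(2)[OF z S tr(2) e]
      using i2 tr by simp
  qed
qed




definition uptri :: "complex mat \<Rightarrow> bool" where
  "uptri A \<longleftrightarrow> (\<forall>i j. j < i \<longrightarrow> i < dim_row A \<longrightarrow> j < dim_col A \<longrightarrow> A $$ (i,j) = 0)"

lemma minus_plus_cancel_mat: "(A :: complex mat) \<in> carrier_mat n m \<Longrightarrow> X \<in> carrier_mat n m \<Longrightarrow> A - X + X = A"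
  by (intro eq_matI, auto)

lemma one_dim_hpd:
  assumes D: "hpd 1 D"
  obtains s :: real where "s > 0" "D = mat 1 1 (\<lambda>_. complex_of_real (s * s))"
proof -
  have Dc: "D \<in> carrier_mat 1 1" "ctrans D = D" using D unfolding hpd_def by auto
  let ?d = "D $$ (0,0)"
  have "cnj ?d = ctrans D $$ (0,0)" using Dc(1) by simp
  hence cd: "cnj ?d = ?d" unfolding Dc(2) .
  let ?e = "vec 1 (\<lambda>_. 1) :: complex vec"
  have "?e \<noteq> 0\<^sub>v 1"
  proof
    assume "?e = 0\<^sub>v 1" hence "?e $ 0 = 0\<^sub>v 1 $ 0" by simp
    thus False by simp
  qed
  hence "Re (qform ?e D ?e) > 0" using D unfolding hpd_def by auto
  moreover have "qform ?e D ?e = ?d" unfolding qform_def using Dc by (auto simp: scalar_prod_def)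
  ultimately have pos: "Re ?d > 0" by simp
  have "Im (cnj ?d) = Im ?d" using cd by simp
  hence im: "Im ?d = 0" by simp
  define s where "s = sqrt (Re ?d)"
  have s: "s > 0" unfolding s_def using pos by simp
  have "s * s = Re ?d" unfolding s_def using pos by simp
  hence "complex_of_real (s * s) = ?d" using im by (simp add: complex_eq_iff)
  hence "D = mat 1 1 (\<lambda>_. complex_of_real (s * s))" using Dc by (intro eq_matI, auto)
  thus ?thesis using that s by auto
qed

lemma chol: "hpd n S \<Longrightarrow> \<exists>L R. L \<in> carrier_mat n n \<and> R \<in> carrier_mat n n \<and> uptri L \<and> uptri R
   \<and> L * R = 1\<^sub>m n \<and> R * L = 1\<^sub>m n \<and> L * ctrans L = S"
proof (induction n arbitrary: S)
  case 0
  have S: "S \<in> carrier_mat 0 0" using 0 unfolding hpd_def by auto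
  have "1\<^sub>m 0 * ctrans (1\<^sub>m 0) = S" using S by (intro eq_matI, auto)
  thus ?case by (intro exI[of _ "1\<^sub>m 0"], auto simp: uptri_def)
next
  case (Suc k)
  have Sc: "S \<in> carrier_mat (Suc k) (Suc k)" "ctrans S = S" using Suc.prems unfolding hpd_def by auto
  define A where "A = subm S 0 k 0 k"
  define B where "B = subm S 0 k k (Suc k)"
  define C where "C = subm S k (Suc k) 0 k"
  define D where "D = subm S k (Suc k) k (Suc k)"
  have Ac: "A \<in> carrier_mat k k" and Bc: "B \<in> carrier_mat k 1" and Cc: "C \<in> carrier_mat 1 k"
    and Dc: "D \<in> carrier_mat 1 1" unfolding A_def B_def C_def D_def by auto
  have Ssplit: "S = four_block_mat A B C D" unfolding A_def B_def C_def D_def by (rule split_sub[OF Sc(1)], simp)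
  have hS: "hpd (k + 1) (four_block_mat A B C D)" using Suc.prems Ssplit by simp
  note sch = schur[OF Ac Bc Cc Dc hS]
  have CB: "C = ctrans B"
    using subm_ctrans[OF Sc(1), where a=k and b="Suc k" and c=0 and d=k] Sc(2) unfolding B_def C_def by simp
  define Sc' where "Sc' = A - B * minv D * C"
  have hSc: "hpd k Sc'" using sch(2) unfolding Sc'_def .
  from Suc.IH[OF hSc] obtain L1 R1 where L1: "L1 \<in> carrier_mat k k" "R1 \<in> carrier_mat k k" "uptri L1" "uptri R1"
    "L1 * R1 = 1\<^sub>m k" "R1 * L1 = 1\<^sub>m k" "L1 * ctrans L1 = Sc'" by blast
  obtain s :: real where s: "s > 0" and Deq: "D = mat 1 1 (\<lambda>_. complex_of_real (s * s))"
    using one_dim_hpd[OF sch(1)] by blast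
  define \<Lambda> where "\<Lambda> = mat 1 1 (\<lambda>_. complex_of_real s)"
  define \<Lambda>i where "\<Lambda>i = mat 1 1 (\<lambda>_. complex_of_real (1 / s))"
  have \<Lambda>c: "\<Lambda> \<in> carrier_mat 1 1" "\<Lambda>i \<in> carrier_mat 1 1" unfolding \<Lambda>_def \<Lambda>i_def by auto
  have f1: "\<Lambda> * \<Lambda>i = 1\<^sub>m 1" unfolding \<Lambda>_def \<Lambda>i_def using s
    by (intro eq_matI, auto simp: scalar_prod_def)
  have f2: "\<Lambda>i * \<Lambda> = 1\<^sub>m 1" unfolding \<Lambda>_def \<Lambda>i_def using s
    by (intro eq_matI, auto simp: scalar_prod_def)
  have f3: "\<Lambda> * ctrans \<Lambda> = D" unfolding \<Lambda>_def Deq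
    by (intro eq_matI, auto simp: scalar_prod_def)
  have f4: "ctrans \<Lambda>i * \<Lambda>i = minv D"
  proof (rule minv_eq[symmetric, OF Dc])
    show "ctrans \<Lambda>i * \<Lambda>i \<in> carrier_mat 1 1" using \<Lambda>c by auto
    show "D * (ctrans \<Lambda>i * \<Lambda>i) = 1\<^sub>m 1" unfolding \<Lambda>i_def Deq using s
      by (intro eq_matI, auto simp: scalar_prod_def field_simps)
  qed
  have f5: "ctrans \<Lambda>i * ctrans \<Lambda> = 1\<^sub>m 1" using ctrans_inv[OF \<Lambda>c f1] .
  define l where "l = B * ctrans \<Lambda>i"
  have lc: "l \<in> carrier_mat k 1" unfolding l_def using Bc \<Lambda>c by auto
  have cl: "ctrans l = \<Lambda>i * C" unfolding l_def CB using ctrans_mult[of B "ctrans \<Lambda>i"] Bc \<Lambda>c by simp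
  define L where "L = four_block_mat L1 l (0\<^sub>m 1 k) \<Lambda>"
  define R where "R = four_block_mat R1 (- (R1 * l * \<Lambda>i)) (0\<^sub>m 1 k) \<Lambda>i"
  have Lc: "L \<in> carrier_mat (Suc k) (Suc k)" unfolding L_def using L1 \<Lambda>c
    using four_block_carrier_mat[OF L1(1) \<Lambda>c(1)] by simp
  have Rc: "R \<in> carrier_mat (Suc k) (Suc k)" unfolding R_def using L1 \<Lambda>c
    using four_block_carrier_mat[OF L1(2) \<Lambda>c(2)] by simp
  have cL: "ctrans L = four_block_mat (ctrans L1) (0\<^sub>m k 1) (\<Lambda>i * C) (ctrans \<Lambda>)"
    unfolding L_def using ctrans_four_block[OF L1(1) lc _ \<Lambda>c(1), of "0\<^sub>m 1 k"] cl by simp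
  have LL: "L * ctrans L = S"
  proof -
    have "L * ctrans L = four_block_mat (L1 * ctrans L1 + l * (\<Lambda>i * C)) (L1 * 0\<^sub>m k 1 + l * ctrans \<Lambda>)
       (0\<^sub>m 1 k * ctrans L1 + \<Lambda> * (\<Lambda>i * C)) (0\<^sub>m 1 k * 0\<^sub>m k 1 + \<Lambda> * ctrans \<Lambda>)"
      unfolding L_def cL[unfolded L_def] by (rule mult_four_block_mat, insert L1 lc \<Lambda>c Cc, auto)
    also have "\<dots> = four_block_mat A B C D"
    proof (rule cong_four_block_mat)
      have "l * (\<Lambda>i * C) = B * ((ctrans \<Lambda>i * \<Lambda>i) * C)" unfolding l_def
        using Bc \<Lambda>c Cc by (simp add: assoc_mult_mat[of _ k 1 _ 1 _ k] assoc_mult_mat[of _ 1 1 _ 1 _ k])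
      also have "\<dots> = B * minv D * C" unfolding f4 using Bc Cc hpd_minv(1)[OF sch(1)] by simp
      finally have "l * (\<Lambda>i * C) = B * minv D * C" .
      thus "L1 * ctrans L1 + l * (\<Lambda>i * C) = A" unfolding L1(7) Sc'_def
        by (rule ssubst, intro minus_plus_cancel_mat[OF Ac], insert Bc Cc hpd_minv(1)[OF sch(1)], auto)
      have "l * ctrans \<Lambda> = B" unfolding l_def
        using Bc \<Lambda>c f5 by (simp add: assoc_mult_mat[of _ k 1 _ 1 _ 1])
      thus "L1 * 0\<^sub>m k 1 + l * ctrans \<Lambda> = B" using L1 Bc by simp
      have "\<Lambda> * (\<Lambda>i * C) = C" by (rule mult_one_cancel[OF \<Lambda>c f1 Cc])
      thus "0\<^sub>m 1 k * ctrans L1 + \<Lambda> * (\<Lambda>i * C) = C" using L1 Cc by simp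
      show "0\<^sub>m 1 k * 0\<^sub>m k 1 + \<Lambda> * ctrans \<Lambda> = D" using f3 Dc by simp
    qed
    finally show ?thesis using Ssplit by simp
  qed
  have LR: "L * R = 1\<^sub>m (Suc k)"
  proof -
    have "L * R = four_block_mat (L1 * R1 + l * 0\<^sub>m 1 k) (L1 * - (R1 * l * \<Lambda>i) + l * \<Lambda>i)
      (0\<^sub>m 1 k * R1 + \<Lambda> * 0\<^sub>m 1 k) (0\<^sub>m 1 k * - (R1 * l * \<Lambda>i) + \<Lambda> * \<Lambda>i)"
      unfolding L_def R_def by (rule mult_four_block_mat, insert L1 lc \<Lambda>c, auto)
    also have "\<dots> = four_block_mat (1\<^sub>m k) (0\<^sub>m k 1) (0\<^sub>m 1 k) (1\<^sub>m 1)"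
    proof (rule cong_four_block_mat)
      have "L1 * (R1 * l * \<Lambda>i) = l * \<Lambda>i"
        using mult_one_cancel[OF L1(1,2,5), of "l * \<Lambda>i" 1] mult_carrier_mat[OF lc \<Lambda>c(2)] L1 lc \<Lambda>c
        by (simp add: assoc_mult_mat[of _ k k _ k _ 1] assoc_mult_mat[of _ k 1 _ 1 _ 1])
      hence "L1 * - (R1 * l * \<Lambda>i) = - (l * \<Lambda>i)" using L1 lc \<Lambda>c by simp
      thus "L1 * - (R1 * l * \<Lambda>i) + l * \<Lambda>i = 0\<^sub>m k 1" using lc \<Lambda>c by simp
    qed (insert L1 lc \<Lambda>c f1, auto)
    finally show ?thesis by simp
  qed
  have RL: "R * L = 1\<^sub>m (Suc k)"
  proof -
    have "R * L = four_block_mat (R1 * L1 + - (R1 * l * \<Lambda>i) * 0\<^sub>m 1 k) (R1 * l + - (R1 * l * \<Lambda>i) * \<Lambda>)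
      (0\<^sub>m 1 k * L1 + \<Lambda>i * 0\<^sub>m 1 k) (0\<^sub>m 1 k * l + \<Lambda>i * \<Lambda>)"
      unfolding L_def R_def by (rule mult_four_block_mat, insert L1 lc \<Lambda>c, auto)
    also have "\<dots> = four_block_mat (1\<^sub>m k) (0\<^sub>m k 1) (0\<^sub>m 1 k) (1\<^sub>m 1)"
    proof (rule cong_four_block_mat)
      have "R1 * l * \<Lambda>i * \<Lambda> = R1 * l"
        using L1 lc \<Lambda>c f2 by (simp add: assoc_mult_mat[of _ k 1 _ 1 _ 1] assoc_mult_mat[of _ k k _ 1 _ 1] mult_carrier_mat[of _ k 1 _ 1])
      hence "- (R1 * l * \<Lambda>i) * \<Lambda> = - (R1 * l)" using L1 lc \<Lambda>c by simp
      thus "R1 * l + - (R1 * l * \<Lambda>i) * \<Lambda> = 0\<^sub>m k 1" using L1 lc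
        by (simp add: add_uminus_zero_mat)
    qed (insert L1 lc \<Lambda>c f2, auto)
    finally show ?thesis by simp
  qed
  have uL: "uptri L" unfolding uptri_def
  proof (intro allI impI)
    fix i j assume ij: "j < i" "i < dim_row L" "j < dim_col L"
    show "L $$ (i,j) = 0"
    proof (cases "i < k")
      case True
      thus ?thesis using ij L1 lc \<Lambda>c unfolding L_def uptri_def by auto
    next
      case False
      thus ?thesis using ij L1 lc \<Lambda>c unfolding L_def by auto
    qed
  qed
  have uR: "uptri R" unfolding uptri_def
  proof (intro allI impI)
    fix i j assume ij: "j < i" "i < dim_row R" "j < dim_col R"
    show "R $$ (i,j) = 0"
    proof (cases "i < k")
      case True
      thus ?thesis using ij L1 lc \<Lambda>c unfolding R_def uptri_def by auto
    next
      case False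
      thus ?thesis using ij L1 lc \<Lambda>c unfolding R_def by auto
    qed
  qed
  show ?case using Lc Rc uL uR LR RL LL by blast
qed



definition nrm :: "complex vec \<Rightarrow> complex" where
  "nrm v = (\<Sum>i<dim_vec v. cnj (v $ i) * v $ i)"

lemma delta_sum: "i < (n::nat) \<Longrightarrow> (\<Sum>j<n. (if i = j then 1 else 0) * f j) = (f i :: complex)"
proof -
  assume i: "i < n"
  have "\<And>j. (if i = j then 1 else 0) * f j = (if i = j then f j else 0)" by auto
  thus ?thesis using i by simp
qed

lemma nrm_cnj: "cnj (nrm v) = nrm v"
  unfolding nrm_def by (simp add: mult.commute)

lemma nrm_pos: assumes v: "v \<in> carrier_vec n" "v \<noteq> 0\<^sub>v n" shows "Re (nrm v) > 0"
proof -
  obtain i where i: "i < n" "v $ i \<noteq> 0"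
  proof (rule ccontr)
    assume "\<not> thesis"
    hence "\<forall>i<n. v $ i = 0" using that by auto
    hence "v = 0\<^sub>v n" using v by (intro eq_vecI, auto)
    thus False using v by auto
  qed
  have e: "Re (nrm v) = (\<Sum>k<n. (Re (v $ k))^2 + (Im (v $ k))^2)"
    unfolding nrm_def using v by (simp add: power2_eq_square)
  have "(Re (v $ i))^2 + (Im (v $ i))^2 > 0" using i(2) complex_eq_iff[of "v $ i" 0]
    by (auto simp: sum_power2_gt_zero_iff)
  also have "(Re (v $ i))^2 + (Im (v $ i))^2 \<le> (\<Sum>k<n. (Re (v $ k))^2 + (Im (v $ k))^2)"
    by (rule member_le_sum, insert i, auto)
  finally show ?thesis unfolding e .
qed

lemma householder:
  fixes v :: "complex vec"
  assumes v: "v \<in> carrier_vec n" "v \<noteq> 0\<^sub>v n"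
  defines "c \<equiv> 2 / nrm v"
  defines "H \<equiv> mat n n (\<lambda>(i,j). (if i = j then 1 else 0) - c * v $ i * cnj (v $ j))"
  shows "H * ctrans H = 1\<^sub>m n"
    "\<And>w. w \<in> carrier_vec n \<Longrightarrow> H *\<^sub>v w = w - (c * (\<Sum>j<n. cnj (v $ j) * w $ j)) \<cdot>\<^sub>v v"
    "cnj c = c" "c * nrm v = 2"
proof -
  have nv0: "nrm v \<noteq> 0" using nrm_pos[OF v] by auto
  show cc: "cnj c = c" unfolding c_def using nrm_cnj[of v] by simp
  show cn: "c * nrm v = 2" unfolding c_def using nv0 by simp
  have nv: "nrm v = (\<Sum>k<n. cnj (v $ k) * v $ k)" unfolding nrm_def using v by simp
  show "H * ctrans H = 1\<^sub>m n"
  proof (rule eq_matI)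
    fix i j assume "i < dim_row (1\<^sub>m n)" "j < dim_col (1\<^sub>m n)"
    hence i: "i < n" and j: "j < n" by auto
    have "(H * ctrans H) $$ (i,j) = (\<Sum>k<n. ((if i = k then 1 else 0) - c * v $ i * cnj (v $ k)) *
         ((if j = k then 1 else 0) - c * cnj (v $ j) * v $ k))"
      unfolding H_def using i j cc by (auto simp: scalar_prod_def lessThan_atLeast0 intro!: sum.cong)
    also have "\<dots> = (\<Sum>k<n. (if i = k then 1 else 0) * ((if j = k then 1 else 0) - c * cnj (v $ j) * v $ k))
       - (\<Sum>k<n. (if j = k then 1 else 0) * (c * v $ i * cnj (v $ k)))
       + c * c * v $ i * cnj (v $ j) * (\<Sum>k<n. cnj (v $ k) * v $ k)"
      by (simp add: sum_subtractf[symmetric] sum.distrib[symmetric] sum_distrib_left algebra_simps)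
    also have "\<dots> = ((if j = i then 1 else 0) - c * cnj (v $ j) * v $ i) - c * v $ i * cnj (v $ j)
       + c * c * v $ i * cnj (v $ j) * nrm v"
      using i j nv by (simp add: delta_sum)
    also have "\<dots> = (if j = i then 1 else 0) + v $ i * cnj (v $ j) * c * (c * nrm v - 2)"
      by (simp add: algebra_simps)
    also have "\<dots> = 1\<^sub>m n $$ (i,j)" using cn i j by auto
    finally show "(H * ctrans H) $$ (i,j) = 1\<^sub>m n $$ (i,j)" .
  qed (auto simp: H_def)
  fix w :: "complex vec" assume w: "w \<in> carrier_vec n"
  show "H *\<^sub>v w = w - (c * (\<Sum>j<n. cnj (v $ j) * w $ j)) \<cdot>\<^sub>v v"
  proof (rule eq_vecI)
    fix i assume "i < dim_vec (w - (c * (\<Sum>j<n. cnj (v $ j) * w $ j)) \<cdot>\<^sub>v v)"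
    hence i: "i < n" using w v by auto
    have "(H *\<^sub>v w) $ i = (\<Sum>j<n. ((if i = j then 1 else 0) - c * v $ i * cnj (v $ j)) * w $ j)"
      unfolding H_def using i w by (auto simp: scalar_prod_def lessThan_atLeast0 intro!: sum.cong)
    also have "\<dots> = (\<Sum>j<n. (if i = j then 1 else 0) * w $ j) - c * v $ i * (\<Sum>j<n. cnj (v $ j) * w $ j)"
      by (simp add: sum_subtractf[symmetric] sum_distrib_left algebra_simps)
    also have "\<dots> = (w - (c * (\<Sum>j<n. cnj (v $ j) * w $ j)) \<cdot>\<^sub>v v) $ i"
      using i w v by (simp add: delta_sum)
    finally show "(H *\<^sub>v w) $ i = (w - (c * (\<Sum>j<n. cnj (v $ j) * w $ j)) \<cdot>\<^sub>v v) $ i" .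
  qed (insert w v, auto simp: H_def)
qed

definition idout :: "complex mat \<Rightarrow> nat \<Rightarrow> nat \<Rightarrow> nat \<Rightarrow> bool" where
  "idout U a b n \<longleftrightarrow> U \<in> carrier_mat n n \<and>
     (\<forall>i<n. \<forall>j<n. \<not> (a \<le> i \<and> i < b \<and> a \<le> j \<and> j < b) \<longrightarrow> U $$ (i,j) = (if i = j then 1 else 0))"

definition supp :: "complex vec \<Rightarrow> nat \<Rightarrow> nat \<Rightarrow> bool" where
  "supp p a b \<longleftrightarrow> (\<forall>i<dim_vec p. \<not> (a \<le> i \<and> i < b) \<longrightarrow> p $ i = 0)"

lemma delta_sum_r: "j < (n::nat) \<Longrightarrow> (\<Sum>k<n. f k * (if k = j then 1 else 0)) = (f j :: complex)"
proof -
  assume j: "j < n"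
  have "\<And>k. f k * (if k = j then 1 else 0) = (if k = j then f k else 0)" by auto
  thus ?thesis using j by simp
qed

lemma idout_mult: assumes U: "idout U a b n" and V: "idout V a b n" shows "idout (U * V) a b n"
proof -
  have Uc: "U \<in> carrier_mat n n" and Vc: "V \<in> carrier_mat n n" using U V unfolding idout_def by auto
  { fix i j assume i: "i < n" and j: "j < n" and nb: "\<not> (a \<le> i \<and> i < b \<and> a \<le> j \<and> j < b)"
    have e: "(U * V) $$ (i,j) = (\<Sum>k<n. U $$ (i,k) * V $$ (k,j))"
      using Uc Vc i j by (auto simp: scalar_prod_def lessThan_atLeast0)
    have "(U * V) $$ (i,j) = (if i = j then 1 else 0)"
    proof (cases "a \<le> i \<and> i < b")
      case False
      hence "\<And>k. k < n \<Longrightarrow> U $$ (i,k) = (if i = k then 1 else 0)" using U i unfolding idout_def by auto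
      hence "(\<Sum>k<n. U $$ (i,k) * V $$ (k,j)) = (\<Sum>k<n. (if i = k then 1 else 0) * V $$ (k,j))" by auto
      also have "\<dots> = V $$ (i,j)" using delta_sum[OF i] .
      also have "\<dots> = (if i = j then 1 else 0)" using V i j False unfolding idout_def by auto
      finally show ?thesis using e by simp
    next
      case True
      hence jb: "\<not> (a \<le> j \<and> j < b)" using nb by auto
      hence "\<And>k. k < n \<Longrightarrow> V $$ (k,j) = (if k = j then 1 else 0)" using V j unfolding idout_def by auto
      hence "(\<Sum>k<n. U $$ (i,k) * V $$ (k,j)) = (\<Sum>k<n. U $$ (i,k) * (if k = j then 1 else 0))" by auto
      also have "\<dots> = U $$ (i,j)" using delta_sum_r[OF j] .
      also have "\<dots> = (if i = j then 1 else 0)" using U i j jb unfolding idout_def by auto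
      finally show ?thesis using e by simp
    qed
  }
  thus ?thesis unfolding idout_def using Uc Vc by auto
qed

lemma unitary_map:
  assumes bn: "b \<le> n" and p: "p \<in> carrier_vec n" and q: "q \<in> carrier_vec n"
    and sp: "supp p a b" and sq: "supp q a b" and eq: "nrm p = nrm q"
  shows "\<exists>U. idout U a b n \<and> U * ctrans U = 1\<^sub>m n \<and> U *\<^sub>v q = p"
proof -
  define x0 where "x0 = (\<Sum>i<n. cnj (q $ i) * p $ i)"
  define th where "th = (if x0 = 0 then 1 else x0 / complex_of_real (cmod x0))"
  have th1: "cnj th * th = 1"
  proof (cases "x0 = 0")
    case False
    hence "cmod x0 \<noteq> 0" by simp
    moreover have "cnj x0 * x0 = complex_of_real ((cmod x0)^2)" using complex_norm_square[of x0] by (simp add: mult.commute)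
    ultimately show ?thesis unfolding th_def using False by (simp add: field_simps power2_eq_square)
  qed (simp add: th_def)
  have thx: "cnj th * x0 = complex_of_real (cmod x0)"
  proof (cases "x0 = 0")
    case False
    hence "cmod x0 \<noteq> 0" by simp
    moreover have "cnj x0 * x0 = complex_of_real ((cmod x0)^2)" using complex_norm_square[of x0] by (simp add: mult.commute)
    ultimately show ?thesis unfolding th_def using False by (simp add: field_simps power2_eq_square)
  qed (simp add: th_def)
  define d where "d = (\<lambda>i. if a \<le> i \<and> i < b then th else 1)"
  have d1: "\<And>i. d i * cnj (d i) = 1" unfolding d_def using th1 by (simp add: mult.commute)
  define Phi where "Phi = mat n n (\<lambda>(i,j). if i = j then d i else 0)"
  have Phic: "Phi \<in> carrier_mat n n" unfolding Phi_def by auto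
  have iPhi: "idout Phi a b n" unfolding idout_def Phi_def d_def by auto
  have uPhi: "Phi * ctrans Phi = 1\<^sub>m n"
  proof (rule eq_matI)
    fix i j assume "i < dim_row (1\<^sub>m n)" "j < dim_col (1\<^sub>m n)"
    hence i: "i < n" and j: "j < n" by auto
    have "(Phi * ctrans Phi) $$ (i,j) = (\<Sum>k<n. (if i = k then 1 else 0) * ((if j = k then 1 else 0) * (d k * cnj (d k))))"
      unfolding Phi_def using i j by (auto simp: scalar_prod_def lessThan_atLeast0 intro!: sum.cong)
    also have "\<dots> = (if j = i then 1 else 0)" using delta_sum[OF i] d1 by simp
    finally show "(Phi * ctrans Phi) $$ (i,j) = 1\<^sub>m n $$ (i,j)" using i j by auto
  qed (auto simp: Phi_def)
  define q' where "q' = th \<cdot>\<^sub>v q"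
  have q'c: "q' \<in> carrier_vec n" unfolding q'_def using q by auto
  have Phq: "Phi *\<^sub>v q = q'"
  proof (rule eq_vecI)
    fix i assume "i < dim_vec q'" hence i: "i < n" using q'c by auto
    have "(Phi *\<^sub>v q) $ i = (\<Sum>j<n. (if i = j then 1 else 0) * (d j * q $ j))"
      unfolding Phi_def using i q by (auto simp: scalar_prod_def lessThan_atLeast0 intro!: sum.cong)
    also have "\<dots> = d i * q $ i" using delta_sum[OF i] by simp
    also have "\<dots> = q' $ i" unfolding q'_def d_def using sq i q unfolding supp_def by auto
    finally show "(Phi *\<^sub>v q) $ i = q' $ i" .
  qed (insert q'c Phic, auto)
  define x' where "x' = (\<Sum>i<n. cnj (q' $ i) * p $ i)"
  have "x' = cnj th * x0"
    unfolding x'_def q'_def x0_def using q by (simp add: sum_distrib_left mult.assoc)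
  hence x'e: "x' = complex_of_real (cmod x0)" using thx by simp
  have x'r: "cnj x' = x'" unfolding x'e by simp
  have nq': "nrm q' = nrm p"
  proof -
    have "nrm q' = cnj th * th * nrm q" unfolding nrm_def q'_def using q
      by (simp add: sum_distrib_left algebra_simps)
    thus ?thesis using th1 eq by simp
  qed
  define v where "v = q' - p"
  have vc: "v \<in> carrier_vec n" unfolding v_def using q'c p by auto
  have sv: "\<And>i. i < n \<Longrightarrow> \<not> (a \<le> i \<and> i < b) \<Longrightarrow> v $ i = 0"
    unfolding v_def q'_def using sp sq p q unfolding supp_def by auto
  show ?thesis
  proof (cases "v = 0\<^sub>v n")
    case True
    hence "q' = p" unfolding v_def using q'c p
      by (metis minus_cancel_vec minus_equation_iff zero_minus_vec carrier_vecD eq_vecI index_minus_vec(1) index_zero_vec(1) right_minus_eq)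
    thus ?thesis using iPhi uPhi Phq by blast
  next
    case False
    note hh = householder[OF vc False]
    define c where "c = 2 / nrm v"
    define H where "H = mat n n (\<lambda>(i,j). (if i = j then 1 else 0) - c * v $ i * cnj (v $ j))"
    have Hc: "H \<in> carrier_mat n n" unfolding H_def by auto
    have uH: "H * ctrans H = 1\<^sub>m n" using hh(1) unfolding H_def c_def .
    have iH: "idout H a b n" unfolding idout_def H_def using sv by auto
    define s where "s = (\<Sum>j<n. cnj (v $ j) * q' $ j)"
    have Hq: "H *\<^sub>v q' = q' - (c * s) \<cdot>\<^sub>v v" using hh(2)[OF q'c] unfolding H_def c_def s_def .
    have cpq: "(\<Sum>j<n. cnj (p $ j) * q' $ j) = x'"
    proof -
      have "(\<Sum>j<n. cnj (p $ j) * q' $ j) = cnj x'" unfolding x'_def by (simp add: mult.commute)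
      thus ?thesis using x'r by simp
    qed
    have se: "s = nrm p - x'"
    proof -
      have "s = (\<Sum>j<n. cnj (q' $ j) * q' $ j) - (\<Sum>j<n. cnj (p $ j) * q' $ j)"
        unfolding s_def v_def using q'c p by (simp add: sum_subtractf[symmetric] algebra_simps)
      also have "(\<Sum>j<n. cnj (q' $ j) * q' $ j) = nrm q'" unfolding nrm_def using q'c by simp
      finally show ?thesis using nq' cpq by simp
    qed
    have nve: "nrm v = 2 * s"
    proof -
      have "nrm v = (\<Sum>j<n. cnj (q' $ j) * q' $ j) - (\<Sum>j<n. cnj (q' $ j) * p $ j)
          - (\<Sum>j<n. cnj (p $ j) * q' $ j) + (\<Sum>j<n. cnj (p $ j) * p $ j)"
        unfolding nrm_def v_def using q'c p
        by (simp add: sum_subtractf[symmetric] sum.distrib[symmetric] algebra_simps)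
      also have "(\<Sum>j<n. cnj (q' $ j) * q' $ j) = nrm q'" unfolding nrm_def using q'c by simp
      also have "(\<Sum>j<n. cnj (p $ j) * p $ j) = nrm p" unfolding nrm_def using p by simp
      finally show ?thesis using nq' cpq se unfolding x'_def by simp
    qed
    have "c * nrm v = 2" using hh(4) unfolding c_def .
    hence "2 * (c * s) = 2" unfolding nve by (simp add: algebra_simps)
    hence cs: "c * s = 1" by simp
    have Hq': "H *\<^sub>v q' = p" unfolding Hq cs using q'c p unfolding v_def by (intro eq_vecI, auto)
    have "idout (H * Phi) a b n" by (rule idout_mult[OF iH iPhi])
    moreover have "(H * Phi) * ctrans (H * Phi) = 1\<^sub>m n"
    proof -
      have "(H * Phi) * ctrans (H * Phi) = H * (Phi * ctrans Phi) * ctrans H"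
        using Hc Phic by (simp add: ctrans_mult assoc_mult_mat[of _ n n _ n _ n] mult_carrier_mat[of _ n n _ n])
      thus ?thesis unfolding uPhi using Hc uH by simp
    qed
    moreover have "(H * Phi) *\<^sub>v q = p" using Hc Phic q Phq Hq' by simp
    ultimately show ?thesis by blast
  qed
qed



definition btri :: "nat \<Rightarrow> nat \<Rightarrow> nat \<Rightarrow> complex mat \<Rightarrow> bool" where
  "btri N t r G \<longleftrightarrow> (\<forall>i<N. \<forall>j<N. blk t (t + r) j < blk t (t + r) i \<longrightarrow> G $$ (i,j) = 0)"

lemma btri_mult: assumes G1: "G1 \<in> carrier_mat N N" and G2: "G2 \<in> carrier_mat N N"
  and b1: "btri N t r G1" and b2: "btri N t r G2"
  shows "btri N t r (G1 * G2)"
  unfolding btri_def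
proof (intro allI impI)
  fix i j assume i: "i < N" and j: "j < N" and bl: "blk t (t + r) j < blk t (t + r) i"
  have "(G1 * G2) $$ (i,j) = (\<Sum>k<N. G1 $$ (i,k) * G2 $$ (k,j))"
    using G1 G2 i j by (auto simp: scalar_prod_def lessThan_atLeast0)
  also have "\<dots> = 0"
  proof (rule sum.neutral, intro ballI)
    fix k assume k: "k \<in> {..<N}"
    show "G1 $$ (i,k) * G2 $$ (k,j) = 0"
    proof (cases "blk t (t + r) k < blk t (t + r) i")
      case True thus ?thesis using b1 i k unfolding btri_def by auto
    next
      case False
      hence "blk t (t + r) j < blk t (t + r) k" using bl by auto
      thus ?thesis using b2 j k unfolding btri_def by auto
    qed
  qed
  finally show "(G1 * G2) $$ (i,j) = 0" .
qed

lemma blk_mono: "i \<le> j \<Longrightarrow> blk t m i \<le> blk t m j"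
  unfolding blk_def by auto

lemma uptri_btri: assumes "G \<in> carrier_mat N N" "uptri G" shows "btri N t r G"
  unfolding btri_def
proof (intro allI impI)
  fix i j assume "i < N" "j < N" "blk t (t + r) j < blk t (t + r) i"
  moreover hence "j < i" using blk_mono[of i j t "t + r"] by (cases "i \<le> j", auto)
  ultimately show "G $$ (i,j) = 0" using assms unfolding uptri_def by auto
qed

lemma idout_btri: assumes U: "idout U a b N"
  and same: "\<And>i j. a \<le> i \<Longrightarrow> i < b \<Longrightarrow> a \<le> j \<Longrightarrow> j < b \<Longrightarrow> blk t (t + r) i = blk t (t + r) j"
  shows "btri N t r U"
  unfolding btri_def
proof (intro allI impI)
  fix i j assume ij: "i < N" "j < N" "blk t (t + r) j < blk t (t + r) i"
  hence "\<not> (a \<le> i \<and> i < b \<and> a \<le> j \<and> j < b)" using same[of i j] by auto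
  moreover have "i \<noteq> j" using ij by auto
  ultimately show "U $$ (i,j) = 0" using U ij unfolding idout_def by auto
qed

lemma Gset_of:
  assumes tr: "t + r \<le> N" and G: "G \<in> carrier_mat N N" and b: "btri N t r G" and d: "det G \<noteq> 0"
  shows "G \<in> Gset N t r"
proof -
  let ?m = "t + r"
  have lt: "llz G t N" unfolding llz_def
  proof (intro allI impI)
    fix i j assume "t \<le> i" "i < N" "j < t"
    thus "G $$ (i,j) = 0" using b unfolding btri_def blk_def by auto
  qed
  have tN: "t \<le> N" using tr by simp
  have ds: "det G = det (subm G 0 t 0 t) * det (subm G t N t N)" by (rule det_split[OF G tN lt])
  have d1: "det (subm G 0 t 0 t) \<noteq> 0" and d2: "det (subm G t N t N) \<noteq> 0" using d ds by auto
  have i1: "invertible_mat (subm G 0 t 0 t)" by (rule invertible_of_det[OF _ d1], simp)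
  have blocks: "invertible_mat (subm G t ?m t ?m) \<and> (?m < N \<longrightarrow> invertible_mat (subm G ?m N ?m N))"
  proof (cases "?m < N")
    case False
    hence "?m = N" using tr by simp
    thus ?thesis using invertible_of_det[OF _ d2] by simp
  next
    case True
    define H where "H = subm G t N t N"
    have Hc: "H \<in> carrier_mat (N - t) (N - t)" unfolding H_def by simp
    have rl: "r \<le> N - t" using tr by simp
    have lH: "llz H r (N - t)" unfolding llz_def H_def
    proof (intro allI impI)
      fix i j assume "r \<le> i" "i < N - t" "j < r"
      thus "subm G t N t N $$ (i,j) = 0" using b unfolding btri_def blk_def by auto
    qed
    have e1: "subm H 0 r 0 r = subm G t ?m t ?m" unfolding H_def by (subst subm_subm, insert rl, auto)
    have e2: "subm H r (N - t) r (N - t) = subm G ?m N ?m N" unfolding H_def by (subst subm_subm, insert rl tr, auto)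
    have "det H = det (subm G t ?m t ?m) * det (subm G ?m N ?m N)"
      using det_split[OF Hc rl lH] unfolding e1 e2 .
    hence "det (subm G t ?m t ?m) \<noteq> 0" "det (subm G ?m N ?m N) \<noteq> 0" using d2 unfolding H_def by auto
    thus ?thesis using invertible_of_det by simp
  qed
  show ?thesis unfolding Gset_def using G invertible_of_det[OF G d] b i1 blocks unfolding btri_def by auto
qed

lemma Fset_mult: assumes G: "G \<in> carrier_mat N N" and b: "btri N t r G" and f: "f \<in> Fset N t"
  shows "G *\<^sub>v f \<in> Fset N t"
proof -
  have fc: "f \<in> carrier_vec N" using f unfolding Fset_def by auto
  { fix i assume i: "t \<le> i" "i < N"
    have "(G *\<^sub>v f) $ i = (\<Sum>j<N. G $$ (i,j) * f $ j)" using G fc i by (auto simp: scalar_prod_def lessThan_atLeast0)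
    also have "\<dots> = 0"
    proof (rule sum.neutral, intro ballI)
      fix j assume j: "j \<in> {..<N}"
      show "G $$ (i,j) * f $ j = 0"
      proof (cases "j < t")
        case True
        hence "blk t (t + r) j < blk t (t + r) i" using i unfolding blk_def by auto
        thus ?thesis using b i j unfolding btri_def by auto
      next
        case False thus ?thesis using f j unfolding Fset_def by auto
      qed
    qed
    finally have "(G *\<^sub>v f) $ i = 0" .
  }
  thus ?thesis unfolding Fset_def using G fc by auto
qed

definition restr :: "complex vec \<Rightarrow> nat \<Rightarrow> nat \<Rightarrow> complex vec" where
  "restr x a b = vec (dim_vec x) (\<lambda>i. if a \<le> i \<and> i < b then x $ i else 0)"

lemma restr_carrier[simp]: "x \<in> carrier_vec n \<Longrightarrow> restr x a b \<in> carrier_vec n"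
  unfolding restr_def by auto

lemma supp_restr: "supp (restr x a b) a b"
  unfolding supp_def restr_def by auto

lemma nrm_restr: assumes x: "x \<in> carrier_vec n" and ab: "a \<le> b" "b \<le> n"
  shows "nrm (restr x a b) = nrm (subv x a b)"
proof -
  let ?g = "\<lambda>i. cnj (x $ i) * x $ i"
  have "nrm (restr x a b) = (\<Sum>i<n. if a \<le> i \<and> i < b then ?g i else 0)"
    unfolding nrm_def restr_def using x by (auto intro!: sum.cong)
  also have "\<dots> = (\<Sum>i<a. if a \<le> i \<and> i < b then ?g i else 0) + (\<Sum>i<n-a. if a \<le> a + i \<and> a + i < b then ?g (a + i) else 0)"
    by (rule sum_split_at, insert ab, simp)
  also have "(\<Sum>i<a. if a \<le> i \<and> i < b then ?g i else 0) = 0" by simp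
  also have "(\<Sum>i<n-a. if a \<le> a + i \<and> a + i < b then ?g (a + i) else 0) =
     (\<Sum>i<b-a. if a \<le> a + i \<and> a + i < b then ?g (a + i) else 0) +
     (\<Sum>i<(n-a)-(b-a). if a \<le> a + ((b-a) + i) \<and> a + ((b-a) + i) < b then ?g (a + ((b-a) + i)) else 0)"
    by (rule sum_split_at, insert ab, simp)
  also have "(\<Sum>i<(n-a)-(b-a). if a \<le> a + ((b-a) + i) \<and> a + ((b-a) + i) < b then ?g (a + ((b-a) + i)) else 0) = 0"
    by (rule sum.neutral, insert ab, auto)
  also have "(\<Sum>i<b-a. if a \<le> a + i \<and> a + i < b then ?g (a + i) else 0) = nrm (subv x a b)"
    unfolding nrm_def by (auto intro!: sum.cong)
  finally show ?thesis by simp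
qed

lemma idout_apply: assumes U: "idout U a b n" and x: "x \<in> carrier_vec n" and i: "i < n"
  shows "(U *\<^sub>v x) $ i = (if a \<le> i \<and> i < b then (U *\<^sub>v restr x a b) $ i else x $ i)"
proof -
  have Uc: "U \<in> carrier_mat n n" using U unfolding idout_def by auto
  have e: "\<And>y. y \<in> carrier_vec n \<Longrightarrow> (U *\<^sub>v y) $ i = (\<Sum>j<n. U $$ (i,j) * y $ j)"
    using Uc i by (auto simp: scalar_prod_def lessThan_atLeast0)
  show ?thesis
  proof (cases "a \<le> i \<and> i < b")
    case True
    have "(\<Sum>j<n. U $$ (i,j) * x $ j) = (\<Sum>j<n. U $$ (i,j) * restr x a b $ j)"
    proof (rule sum.cong[OF refl])
      fix j assume j: "j \<in> {..<n}"
      show "U $$ (i,j) * x $ j = U $$ (i,j) * restr x a b $ j"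
      proof (cases "a \<le> j \<and> j < b")
        case True thus ?thesis using x j unfolding restr_def by auto
      next
        case False
        hence "U $$ (i,j) = 0" using U i j True unfolding idout_def by auto
        thus ?thesis by simp
      qed
    qed
    thus ?thesis using True e[OF x] e[OF restr_carrier[OF x]] by simp
  next
    case False
    hence "\<And>j. j < n \<Longrightarrow> U $$ (i,j) = (if i = j then 1 else 0)" using U i unfolding idout_def by auto
    hence "(\<Sum>j<n. U $$ (i,j) * x $ j) = (\<Sum>j<n. (if i = j then 1 else 0) * x $ j)" by auto
    also have "\<dots> = x $ i" using delta_sum[OF i] .
    finally show ?thesis using False e[OF x] by auto
  qed
qed

lemma subm_one: "b \<le> n \<Longrightarrow> subm (1\<^sub>m n) a b a b = 1\<^sub>m (b - a)"
  by (intro eq_matI, auto)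

lemma subm_one_off: "b \<le> n \<Longrightarrow> d \<le> n \<Longrightarrow> b \<le> c \<Longrightarrow> subm (1\<^sub>m n) a b c d = 0\<^sub>m (b - a) (d - c)"
  by (intro eq_matI, auto)

lemma subm_one_off': "b \<le> n \<Longrightarrow> d \<le> n \<Longrightarrow> d \<le> a \<Longrightarrow> subm (1\<^sub>m n) a b c d = 0\<^sub>m (b - a) (d - c)"
  by (intro eq_matI, auto)

lemma minv_one: "minv (1\<^sub>m n) = 1\<^sub>m n"
  by (rule minv_eq, auto)

lemma qform_one: "x \<in> carrier_vec n \<Longrightarrow> qform x (1\<^sub>m n) x = nrm x"
  unfolding qform_def nrm_def by simp

lemma t1_one: assumes w: "w \<in> carrier_vec N" and tr: "t + r \<le> N"
  shows "t + r < N \<Longrightarrow> t1 N t r (w, 1\<^sub>m N) = [nrm (subv w t (t + r)), nrm (subv w (t + r) N)]"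
    "t + r = N \<Longrightarrow> t1 N t r (w, 1\<^sub>m N) = [nrm (subv w t (t + r))]"
proof -
  let ?m = "t + r"
  have s22: "subm (1\<^sub>m N) t ?m t ?m = 1\<^sub>m r" using subm_one[OF tr, of t] by simp
  have s33: "subm (1\<^sub>m N) ?m N ?m N = 1\<^sub>m (N - ?m)" using subm_one[of N N ?m] by simp
  have s23: "subm (1\<^sub>m N) t ?m ?m N = 0\<^sub>m r (N - ?m)" using subm_one_off[OF tr, of N ?m t] by simp
  have s32: "subm (1\<^sub>m N) ?m N t ?m = 0\<^sub>m (N - ?m) r" using subm_one_off'[where n=N and a="?m" and b=N and c=t and d="?m"] tr by simp
  have q2: "qform (subv w t ?m) (1\<^sub>m r) (subv w t ?m) = nrm (subv w t ?m)"
    by (rule qform_one, simp)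
  have q3: "qform (subv w ?m N) (1\<^sub>m (N - ?m)) (subv w ?m N) = nrm (subv w ?m N)"
    by (rule qform_one, simp)
  have z23: "subv w t ?m - 0\<^sub>m r (N - ?m) *\<^sub>v (1\<^sub>m (N - ?m) *\<^sub>v subv w ?m N) = subv w t ?m"
    by (intro eq_vecI, auto simp: scalar_prod_def)
  have S23: "1\<^sub>m r - 0\<^sub>m r (N - ?m) * 1\<^sub>m (N - ?m) * 0\<^sub>m (N - ?m) r = (1\<^sub>m r :: complex mat)"
    by (intro eq_matI, auto simp: scalar_prod_def)
  assume "?m < N"
  thus "t1 N t r (w, 1\<^sub>m N) = [nrm (subv w t ?m), nrm (subv w ?m N)]"
    unfolding t1_def Let_def prod.case s22 s33 s23 s32 minv_one z23 S23 using q2 q3 by simp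
next
  let ?m = "t + r"
  assume e: "?m = N"
  have s22: "subm (1\<^sub>m N) t ?m t ?m = 1\<^sub>m r" using subm_one[OF tr, of t] by simp
  have q2: "qform (subv w t ?m) (1\<^sub>m r) (subv w t ?m) = nrm (subv w t ?m)"
    by (rule qform_one, simp)
  show "t1 N t r (w, 1\<^sub>m N) = [nrm (subv w t ?m)]"
    unfolding t1_def Let_def prod.case s22 minv_one using q2 e by simp
qed



lemma canon:
  assumes t1: "1 \<le> t" and tr: "t + r \<le> N" and z: "z \<in> carrier_vec N" and S: "hpd N S"
  obtains L R where "L \<in> carrier_mat N N" "R \<in> carrier_mat N N" "uptri L" "uptri R"
    "L * R = 1\<^sub>m N" "R * L = 1\<^sub>m N" "L * ctrans L = S"
    "t1 N t r (z, S) = t1 N t r (R *\<^sub>v z, 1\<^sub>m N)"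
proof -
  obtain L R where LR: "L \<in> carrier_mat N N" "R \<in> carrier_mat N N" "uptri L" "uptri R"
    "L * R = 1\<^sub>m N" "R * L = 1\<^sub>m N" "L * ctrans L = S" using chol[OF S] by blast
  have dR: "det R \<noteq> 0" by (rule det_ne0_of_inv[OF LR(2) LR(1) LR(6)])
  have RG: "R \<in> Gset N t r" by (rule Gset_of[OF tr LR(2) uptri_btri[OF LR(2,4)] dR])
  have F0: "0\<^sub>v N \<in> Fset N t" unfolding Fset_def by auto
  have "t1 N t r (act (R, 0\<^sub>v N) (z,S)) = t1 N t r (z,S)"
    by (rule invariance[OF t1 tr RG F0 z S])
  moreover have "act (R, 0\<^sub>v N) (z,S) = (R *\<^sub>v z, 1\<^sub>m N)"
  proof -
    have "R *\<^sub>v z + 0\<^sub>v N = R *\<^sub>v z" using LR z by simp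
    moreover have "R * S * ctrans R = 1\<^sub>m N"
    proof -
      have "R * S * ctrans R = (R * L) * (ctrans L * ctrans R)" unfolding LR(7)[symmetric]
        using LR(1,2) by (simp add: assoc_mult_mat[of _ N N _ N _ N] mult_carrier_mat[of _ N N _ N])
      also have "ctrans L * ctrans R = 1\<^sub>m N" using ctrans_inv[OF LR(2) LR(1) LR(6)] .
      finally show ?thesis using LR by simp
    qed
    ultimately show ?thesis unfolding act_def by simp
  qed
  ultimately show ?thesis using that LR by simp
qed

lemma vec_add_minus_cancel: "a \<in> carrier_vec n \<Longrightarrow> b \<in> carrier_vec n \<Longrightarrow> a + (b - a) = (b :: complex vec)"
  by (intro eq_vecI, auto)

lemma nrm_empty: "dim_vec v = 0 \<Longrightarrow> nrm v = 0"
  unfolding nrm_def by simp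

theorem proposition1:
  fixes N t r K :: nat
  assumes "N \<ge> 2" and "t \<ge> 1" and "r \<ge> 1" and "t + r \<le> N" and "K \<ge> N"
  shows "maximal_invariant (t1 N t r) (Dset N) (Lset N t r) act"
proof -
  have tr: "t + r \<le> N" using assms by simp
  have t1': "1 \<le> t" using assms by simp
  let ?m = "t + r"
  have part1: "\<forall>x\<in>Dset N. \<forall>g\<in>Lset N t r. t1 N t r (act g x) = t1 N t r x"
  proof (intro ballI)
    fix x g assume x: "x \<in> Dset N" and g: "g \<in> Lset N t r"
    obtain z S where xe: "x = (z,S)" and z: "z \<in> carrier_vec N" and S: "hpd N S" using x unfolding Dset_def by auto
    obtain G f where ge: "g = (G,f)" and G: "G \<in> Gset N t r" and f: "f \<in> Fset N t" using g unfolding Lset_def by auto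
    show "t1 N t r (act g x) = t1 N t r x" unfolding xe ge by (rule invariance[OF _ tr G f z S], insert assms, simp)
  qed
  have part2: "\<forall>x\<in>Dset N. \<forall>y\<in>Dset N. t1 N t r x = t1 N t r y \<longrightarrow> (\<exists>g\<in>Lset N t r. x = act g y)"
  proof (intro ballI impI)
    fix x y assume x: "x \<in> Dset N" and y: "y \<in> Dset N" and eq: "t1 N t r x = t1 N t r y"
    obtain z S where xe: "x = (z,S)" and z: "z \<in> carrier_vec N" and S: "hpd N S" using x unfolding Dset_def by auto
    obtain z' S' where ye: "y = (z',S')" and z': "z' \<in> carrier_vec N" and S': "hpd N S'" using y unfolding Dset_def by auto
    obtain L R where LR: "L \<in> carrier_mat N N" "R \<in> carrier_mat N N" "uptri L" "uptri R"
      "L * R = 1\<^sub>m N" "R * L = 1\<^sub>m N" "L * ctrans L = S" and tx: "t1 N t r (z, S) = t1 N t r (R *\<^sub>v z, 1\<^sub>m N)"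
      using canon[OF t1' tr z S] by metis
    obtain L' R' where LR': "L' \<in> carrier_mat N N" "R' \<in> carrier_mat N N" "uptri L'" "uptri R'"
      "L' * R' = 1\<^sub>m N" "R' * L' = 1\<^sub>m N" "L' * ctrans L' = S'" and ty: "t1 N t r (z', S') = t1 N t r (R' *\<^sub>v z', 1\<^sub>m N)"
      using canon[OF t1' tr z' S'] by metis
    define w where "w = R *\<^sub>v z"
    define w' where "w' = R' *\<^sub>v z'"
    have wc: "w \<in> carrier_vec N" "w' \<in> carrier_vec N" unfolding w_def w'_def using LR LR' z z' by auto
    have teq: "t1 N t r (w, 1\<^sub>m N) = t1 N t r (w', 1\<^sub>m N)" using eq tx ty unfolding xe ye w_def w'_def by simp
    have n23: "nrm (subv w t ?m) = nrm (subv w' t ?m) \<and> nrm (subv w ?m N) = nrm (subv w' ?m N)"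
    proof (cases "?m < N")
      case True
      show ?thesis using teq unfolding t1_one(1)[OF wc(1) tr True] t1_one(1)[OF wc(2) tr True] by simp
    next
      case False
      hence e: "?m = N" using tr by simp
      show ?thesis using teq unfolding t1_one(2)[OF wc(1) tr e] t1_one(2)[OF wc(2) tr e]
        using e by (simp add: nrm_empty)
    qed
    define p2 where "p2 = restr w t ?m"
    define q2 where "q2 = restr w' t ?m"
    define p3 where "p3 = restr w ?m N"
    define q3 where "q3 = restr w' ?m N"
    have np2: "nrm p2 = nrm q2" unfolding p2_def q2_def
      using nrm_restr[OF wc(1), of t ?m] nrm_restr[OF wc(2), of t ?m] n23 tr by simp
    have np3: "nrm p3 = nrm q3" unfolding p3_def q3_def
      using nrm_restr[OF wc(1), of ?m N] nrm_restr[OF wc(2), of ?m N] n23 tr by simp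
    obtain U2 where U2: "idout U2 t ?m N" "U2 * ctrans U2 = 1\<^sub>m N" "U2 *\<^sub>v q2 = p2"
      using unitary_map[OF tr _ _ _ _ np2] wc unfolding p2_def q2_def by (metis restr_carrier supp_restr)
    obtain U3 where U3: "idout U3 ?m N N" "U3 * ctrans U3 = 1\<^sub>m N" "U3 *\<^sub>v q3 = p3"
      using unitary_map[OF order.refl _ _ _ _ np3] wc unfolding p3_def q3_def by (metis restr_carrier supp_restr)
    have U2c: "U2 \<in> carrier_mat N N" and U3c: "U3 \<in> carrier_mat N N" using U2 U3 unfolding idout_def by auto
    define U where "U = U2 * U3"
    have Uc: "U \<in> carrier_mat N N" unfolding U_def using U2c U3c by auto
    have bU: "btri N t r U" unfolding U_def
    proof (rule btri_mult[OF U2c U3c])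
      show "btri N t r U2" by (rule idout_btri[OF U2(1)], auto simp: blk_def)
      show "btri N t r U3" by (rule idout_btri[OF U3(1)], auto simp: blk_def)
    qed
    have uU: "U * ctrans U = 1\<^sub>m N"
    proof -
      have "U * ctrans U = U2 * (U3 * ctrans U3) * ctrans U2" unfolding U_def
        using U2c U3c by (simp add: ctrans_mult assoc_mult_mat[of _ N N _ N _ N] mult_carrier_mat[of _ N N _ N])
      thus ?thesis using U2 U3 U2c by simp
    qed
    have dU: "det U \<noteq> 0" by (rule det_ne0_of_inv[OF Uc _ uU], insert Uc, auto)
    define y3 where "y3 = U3 *\<^sub>v w'"
    have y3c: "y3 \<in> carrier_vec N" unfolding y3_def using U3c wc by auto
    have y3i: "\<And>i. i < N \<Longrightarrow> y3 $ i = (if ?m \<le> i then w $ i else w' $ i)"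
    proof -
      fix i assume i: "i < N"
      have "y3 $ i = (if ?m \<le> i \<and> i < N then (U3 *\<^sub>v q3) $ i else w' $ i)"
        unfolding y3_def q3_def by (rule idout_apply[OF U3(1) wc(2) i])
      thus "y3 $ i = (if ?m \<le> i then w $ i else w' $ i)" unfolding U3(3) p3_def restr_def using i wc by auto
    qed
    have ry3: "restr y3 t ?m = q2" unfolding q2_def restr_def using y3c wc y3i by (intro eq_vecI, auto)
    have Uw: "\<And>i. t \<le> i \<Longrightarrow> i < N \<Longrightarrow> (U *\<^sub>v w') $ i = w $ i"
    proof -
      fix i assume i: "t \<le> i" "i < N"
      have "U *\<^sub>v w' = U2 *\<^sub>v y3" unfolding U_def y3_def using U2c U3c wc by simp
      hence "(U *\<^sub>v w') $ i = (if t \<le> i \<and> i < ?m then (U2 *\<^sub>v restr y3 t ?m) $ i else y3 $ i)"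
        using idout_apply[OF U2(1) y3c i(2)] by simp
      moreover have "U2 *\<^sub>v restr y3 t ?m = p2" using ry3 U2(3) by simp
      ultimately show "(U *\<^sub>v w') $ i = w $ i" unfolding p2_def restr_def using i wc y3i by auto
    qed
    define f where "f = w - U *\<^sub>v w'"
    have fc: "f \<in> carrier_vec N" unfolding f_def using wc Uc by auto
    have fF: "f \<in> Fset N t" unfolding Fset_def using fc Uw wc Uc unfolding f_def by auto
    define G where "G = L * U * R'"
    have Gc: "G \<in> carrier_mat N N" unfolding G_def using LR Uc LR' by auto
    have bLU: "btri N t r (L * U)" by (rule btri_mult[OF LR(1) Uc uptri_btri[OF LR(1,3)] bU])
    have bG: "btri N t r G" unfolding G_def
      by (rule btri_mult[OF _ LR'(2) bLU uptri_btri[OF LR'(2,4)]], insert LR Uc, auto)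
    have dG: "det G \<noteq> 0"
    proof -
      have "det L \<noteq> 0" by (rule det_ne0_of_inv[OF LR(1,2,5)])
      moreover have "det R' \<noteq> 0" by (rule det_ne0_of_inv[OF LR'(2,1,6)])
      ultimately show ?thesis unfolding G_def using det_mult[OF LR(1) Uc] det_mult[OF _ LR'(2), of "L * U"] LR(1) Uc dU by auto
    qed
    have GG: "G \<in> Gset N t r" by (rule Gset_of[OF tr Gc bG dG])
    define f' where "f' = L *\<^sub>v f"
    have fF': "f' \<in> Fset N t" unfolding f'_def by (rule Fset_mult[OF LR(1) uptri_btri[OF LR(1,3)] fF])
    have vec_eq: "G *\<^sub>v z' + f' = z"
    proof -
      have "G *\<^sub>v z' = L *\<^sub>v (U *\<^sub>v w')" unfolding G_def w'_def using LR(1) Uc LR'(2) z'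
        by (simp add: assoc_mult_mat_vec[of _ N N _ N z'] mult_carrier_mat[of _ N N _ N])
      moreover have "f' = L *\<^sub>v w - L *\<^sub>v (U *\<^sub>v w')" unfolding f'_def f_def
        by (rule mult_minus_distrib_mat_vec[OF LR(1)], insert wc Uc, auto)
      moreover have "L *\<^sub>v w = z" unfolding w_def using LR z by (simp add: assoc_mult_mat_vec[symmetric])
      moreover have "L *\<^sub>v (U *\<^sub>v w') \<in> carrier_vec N" using LR Uc wc by auto
      moreover have "L *\<^sub>v w \<in> carrier_vec N" using LR wc by auto
      ultimately show ?thesis using vec_add_minus_cancel by metis
    qed
    have mat_eq: "G * S' * ctrans G = S"
    proof -
      have cG: "ctrans G = ctrans R' * (ctrans U * ctrans L)" unfolding G_def
        using LR(1) Uc LR'(2) by (simp add: ctrans_mult assoc_mult_mat[of _ N N _ N _ N] mult_carrier_mat[of _ N N _ N])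
      have "G * S' * ctrans G = L * (U * (R' * (L' * (ctrans L' * (ctrans R' * (ctrans U * ctrans L))))))"
        unfolding cG unfolding G_def LR'(7)[symmetric]
        using LR(1) Uc LR'(1,2) by (simp add: assoc_mult_mat[of _ N N _ N _ N] mult_carrier_mat[of _ N N _ N])
      also have "ctrans L' * (ctrans R' * (ctrans U * ctrans L)) = ctrans U * ctrans L"
        by (rule mult_one_cancel[OF _ _ ctrans_inv[OF LR'(2,1,6)]], insert LR' LR Uc, auto)
      also have "R' * (L' * (ctrans U * ctrans L)) = ctrans U * ctrans L"
        by (rule mult_one_cancel[OF LR'(2,1,6)], insert LR Uc, auto)
      also have "U * (ctrans U * ctrans L) = ctrans L"
        by (rule mult_one_cancel[OF Uc _ uU], insert LR Uc, auto)
      finally show ?thesis using LR by simp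
    qed
    have "(G, f') \<in> Lset N t r" unfolding Lset_def using GG fF' by auto
    moreover have "x = act (G, f') y" unfolding xe ye act_def using vec_eq mat_eq by simp
    ultimately show "\<exists>g\<in>Lset N t r. x = act g y" by blast
  qed
  show ?thesis unfolding maximal_invariant_def using part1 part2 by blast
qed


end
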